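(* Let $(F_i,g_{F_i})$, $i=1,\dots,m$, be Ricci-flat Riemannian manifolds with $s_i=\dim F_i$, let $p_1,\dots,p_m\in\mathbb{R}$, and set $\zeta=\sum_l s_lp_l$, $\eta=\sum_l s_lp_l^2$. Let $\bar\zeta,\bar\eta\in\mathbb{R}\setminus\{0\}$ with $\bar\zeta^2=\bar\eta$, and let $\psi(t)=at+b$ with $a,b\ge0$ and $a^2+b^2>0$. If $\zeta=\bar\zeta$, $\eta=\bar\eta$, and $\zeta-p_i\neq0$, $\eta-p_i\zeta\neq0$ for all $i$, then $M=(0,\infty)\times F_1\times\cdots\times F_m$ with metric $g=-\mathrm{d}t^2\oplus\varphi^{2p_1}g_{F_1}\oplus\cdots\oplus\varphi^{2p_m}g_{F_m}$, where $\varphi=\psi^{1/\zeta}$, is a Ricci-flat space-time.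
   Context: The metric means $\pi^*(-\mathrm{d}t^2)+\sum_i(\varphi\circ\pi)^{2p_i}\sigma_i^*(g_{F_i})$ with $\pi,\sigma_i$ the projections onto $(0,\infty)$ and $F_i$. *)

theory Defs
  imports "HOL-Analysis.Analysis"
begin

text \<open>Ricci-flatness is a local property, so manifolds are represented by arbitrary
coordinate charts (open subsets of R^n with a smooth metric).\<close>

definition coord_space :: "nat \<Rightarrow> (nat \<Rightarrow> real) set" where
  "coord_space n = {x. \<forall>k\<ge>n. x k = 0}"

definition pd :: "nat \<Rightarrow> ((nat \<Rightarrow> real) \<Rightarrow> real) \<Rightarrow> (nat \<Rightarrow> real) \<Rightarrow> real" where
  "pd k f x = deriv (\<lambda>h. f (x(k := x k + h))) 0"

fun ipd :: "nat list \<Rightarrow> ((nat \<Rightarrow> real) \<Rightarrow> real) \<Rightarrow> (nat \<Rightarrow> real) \<Rightarrow> real" where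
  "ipd [] f = f"
| "ipd (k # ks) f = pd k (ipd ks f)"

definition smooth_on :: "nat \<Rightarrow> (nat \<Rightarrow> real) set \<Rightarrow> ((nat \<Rightarrow> real) \<Rightarrow> real) \<Rightarrow> bool" where
  "smooth_on n U f \<longleftrightarrow>
     (\<forall>ks. set ks \<subseteq> {..<n} \<longrightarrow>
        continuous_on U (ipd ks f) \<and>
        (\<forall>x\<in>U. \<forall>k<n. (\<lambda>h. ipd ks f (x(k := x k + h))) differentiable (at 0)))"

type_synonym metric = "(nat \<Rightarrow> real) \<Rightarrow> nat \<Rightarrow> nat \<Rightarrow> real"

definition is_inverse_mat :: "nat \<Rightarrow> (nat \<Rightarrow> nat \<Rightarrow> real) \<Rightarrow> (nat \<Rightarrow> nat \<Rightarrow> real) \<Rightarrow> bool" where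
  "is_inverse_mat n A B \<longleftrightarrow>
     (\<forall>i<n. \<forall>j<n. (\<Sum>k<n. A i k * B k j) = (if i = j then 1 else 0))
     \<and> (\<forall>i j. i \<ge> n \<or> j \<ge> n \<longrightarrow> B i j = 0)"

definition semi_riem_metric :: "nat \<Rightarrow> (nat \<Rightarrow> real) set \<Rightarrow> metric \<Rightarrow> bool" where
  "semi_riem_metric n U g \<longleftrightarrow>
     openin (top_of_set (coord_space n)) U \<and>
     (\<forall>i<n. \<forall>j<n. smooth_on n U (\<lambda>x. g x i j)) \<and>
     (\<forall>x\<in>U. \<forall>i j. g x i j = g x j i) \<and>
     (\<forall>x\<in>U. \<exists>B. is_inverse_mat n (g x) B)"

definition riem_metric :: "nat \<Rightarrow> (nat \<Rightarrow> real) set \<Rightarrow> metric \<Rightarrow> bool" where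
  "riem_metric n U g \<longleftrightarrow> semi_riem_metric n U g \<and>
     (\<forall>x\<in>U. \<forall>v. (\<exists>i<n. v i \<noteq> 0) \<longrightarrow> (\<Sum>i<n. \<Sum>j<n. g x i j * v i * v j) > 0)"

definition inv_metric :: "nat \<Rightarrow> metric \<Rightarrow> metric" where
  "inv_metric n g x = (THE B. is_inverse_mat n (g x) B)"

definition christoffel :: "nat \<Rightarrow> metric \<Rightarrow> nat \<Rightarrow> nat \<Rightarrow> nat \<Rightarrow> (nat \<Rightarrow> real) \<Rightarrow> real" where
  "christoffel n g k i j x =
     (1/2) * (\<Sum>l<n. inv_metric n g x k l *
        (pd i (\<lambda>y. g y j l) x + pd j (\<lambda>y. g y i l) x - pd l (\<lambda>y. g y i j) x))"

definition ricci :: "nat \<Rightarrow> metric \<Rightarrow> (nat \<Rightarrow> real) \<Rightarrow> nat \<Rightarrow> nat \<Rightarrow> real" where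
  "ricci n g x i j =
     (\<Sum>k<n. pd k (christoffel n g k i j) x - pd j (christoffel n g k i k) x)
   + (\<Sum>k<n. \<Sum>l<n. christoffel n g k k l x * christoffel n g l i j x
                    - christoffel n g k j l x * christoffel n g l i k x)"

definition ricci_flat_on :: "nat \<Rightarrow> (nat \<Rightarrow> real) set \<Rightarrow> metric \<Rightarrow> bool" where
  "ricci_flat_on n U g \<longleftrightarrow> (\<forall>x\<in>U. \<forall>i<n. \<forall>j<n. ricci n g x i j = 0)"

definition lorentz_metric :: "nat \<Rightarrow> (nat \<Rightarrow> real) set \<Rightarrow> metric \<Rightarrow> bool" where
  "lorentz_metric n U g \<longleftrightarrow> semi_riem_metric n U g \<and> n \<ge> 1 \<and>
     (\<forall>x\<in>U. g x 0 0 < 0 \<and>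
       (\<forall>v. v 0 = 0 \<longrightarrow> (\<exists>i<n. v i \<noteq> 0) \<longrightarrow> (\<Sum>i<n. \<Sum>j<n. g x i j * v i * v j) > 0))"

text \<open>Multiply warped product (0,inf) x F_1 x ... x F_m in coordinates:
coordinate 0 is t; fibre i (i < m) occupies coordinates off s i ..< off s i + s i.\<close>
definition off :: "(nat \<Rightarrow> nat) \<Rightarrow> nat \<Rightarrow> nat" where
  "off s i = 1 + (\<Sum>l<i. s l)"

definition fib_proj :: "(nat \<Rightarrow> nat) \<Rightarrow> nat \<Rightarrow> (nat \<Rightarrow> real) \<Rightarrow> (nat \<Rightarrow> real)" where
  "fib_proj s i x = (\<lambda>k. if k < s i then x (off s i + k) else 0)"

definition wp_dim :: "nat \<Rightarrow> (nat \<Rightarrow> nat) \<Rightarrow> nat" where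
  "wp_dim m s = 1 + (\<Sum>l<m. s l)"

definition wp_domain :: "nat \<Rightarrow> (nat \<Rightarrow> nat) \<Rightarrow> (nat \<Rightarrow> (nat \<Rightarrow> real) set) \<Rightarrow> (nat \<Rightarrow> real) set" where
  "wp_domain m s U = {x \<in> coord_space (wp_dim m s). x 0 > 0 \<and> (\<forall>i<m. fib_proj s i x \<in> U i)}"

definition wp_metric :: "nat \<Rightarrow> (nat \<Rightarrow> nat) \<Rightarrow> (nat \<Rightarrow> metric) \<Rightarrow> (real \<Rightarrow> real) \<Rightarrow> (nat \<Rightarrow> real) \<Rightarrow> metric" where
  "wp_metric m s g \<phi> p x a b =
     (if a = 0 \<and> b = 0 then -1
      else if (\<exists>i<m. off s i \<le> a \<and> a < off s i + s i \<and> off s i \<le> b \<and> b < off s i + s i)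
      then (let i = (THE i. i < m \<and> off s i \<le> a \<and> a < off s i + s i) in
            (\<phi> (x 0)) powr (2 * p i) * g i (fib_proj s i x) (a - off s i) (b - off s i))
      else 0)"

end

theory Submission
  imports Defs
begin

lemma line_cont: "continuous_on UNIV (\<lambda>h::real. x(k := x k + h))"
proof (intro continuous_on_coordinatewise_then_product)
  fix i show "continuous_on UNIV (\<lambda>h::real. (x(k := x k + h)) i)"
    by (cases "i = k") (auto intro!: continuous_intros)
qed

lemma line_in_coord: "x \<in> coord_space n \<Longrightarrow> k < n \<Longrightarrow> x(k := v) \<in> coord_space n"
  by (auto simp: coord_space_def)

lemma eventually_line:
  assumes "openin (top_of_set (coord_space n)) W" "x \<in> W" "k < n"
  shows "eventually (\<lambda>h. x(k := x k + h) \<in> W) (nhds 0)"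
proof -
  obtain V where O: "open V" "W = coord_space n \<inter> V" using assms(1) by (auto simp: openin_open)
  have "open ((\<lambda>h::real. x(k := x k + h)) -` V)"
    using line_cont O(1) by (metis open_vimage)
  moreover have "0 \<in> (\<lambda>h::real. x(k := x k + h)) -` V" using O assms(2) by simp
  ultimately have "eventually (\<lambda>h. h \<in> (\<lambda>h::real. x(k := x k + h)) -` V) (nhds 0)"
    by (rule eventually_nhds_in_open)
  then show ?thesis
    by (rule eventually_mono) (use O assms in \<open>auto intro: line_in_coord\<close>)
qed

lemma pd_cong:
  assumes "openin (top_of_set (coord_space n)) W" "x \<in> W" "k < n" "\<And>y. y \<in> W \<Longrightarrow> f y = g y"
  shows "pd k f x = pd k g x"
  unfolding pd_def
  by (rule deriv_cong_ev[OF eventually_mono[OF eventually_line[OF assms(1-3)]]]) (auto simp: assms(4))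

lemma line_DERIV_cong:
  assumes "openin (top_of_set (coord_space n)) W" "x \<in> W" "k < n" "\<And>y. y \<in> W \<Longrightarrow> f y = g y"
  shows "DERIV (\<lambda>h. f (x(k := x k + h))) 0 :> D \<longleftrightarrow> DERIV (\<lambda>h. g (x(k := x k + h))) 0 :> D"
  by (rule DERIV_cong_ev[OF refl eventually_mono[OF eventually_line[OF assms(1-3)]] refl]) (auto simp: assms(4))

lemma pdI: "DERIV (\<lambda>h. f (x(k := x k + h))) 0 :> D \<Longrightarrow> pd k f x = D"
  unfolding pd_def by (rule DERIV_imp_deriv)

lemma pd_const[simp]: "pd k (\<lambda>y. c) x = 0"
  unfolding pd_def by simp

lemma sum_lessThan_add: "(\<Sum>k<a+(b::nat). F k) = (\<Sum>k<a. F k) + (\<Sum>c<b. F (a + c))"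
  by (induction b) (auto simp: add.assoc sum.lessThan_Suc)

lemma off_Suc: "off s (Suc l) = off s l + s l"
  by (simp add: off_def)

lemma off_ge1: "off s l \<ge> 1" by (simp add: off_def)

lemma off_mono: "l < l' \<Longrightarrow> off s l + s l \<le> off s l'"
proof (induction l' arbitrary: l)
  case 0 then show ?case by simp
next
  case (Suc l')
  show ?case
  proof (cases "l = l'")
    case True then show ?thesis by (simp add: off_Suc)
  next
    case False
    then have "l < l'" using Suc.prems by simp
    then have "off s l + s l \<le> off s l'" by (rule Suc.IH)
    then show ?thesis by (simp add: off_Suc)
  qed
qed

lemma wp_dim_off: "wp_dim m s = off s m" by (simp add: wp_dim_def off_def)

lemma off_le_dim: "l < m \<Longrightarrow> off s l + s l \<le> wp_dim m s"
  by (metis wp_dim_off off_mono)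

lemma blk_unique:
  assumes "l < m" "c < s l" "off s l' \<le> off s l + c" "off s l + c < off s l' + s l'"
  shows "l' = l"
proof (rule ccontr)
  assume "l' \<noteq> l"
  then consider "l < l'" | "l' < l" by linarith
  then show False
  proof cases
    case 1 with off_mono[OF 1, of s] assms show False by linarith
  next
    case 2 with off_mono[OF 2, of s] assms show False by linarith
  qed
qed

lemma the_blk:
  assumes "l < m" "c < s l"
  shows "(THE i. i < m \<and> off s i \<le> off s l + c \<and> off s l + c < off s i + s i) = l"
  by (rule the_equality) (use assms blk_unique in auto)

lemma decomp:
  assumes "k < wp_dim m s" "k \<noteq> 0"
  shows "\<exists>l<m. \<exists>c<s l. k = off s l + c"
  using assms
proof (induction m)
  case 0 then show ?case by (simp add: wp_dim_def)
next
  case (Suc m)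
  show ?case
  proof (cases "k < wp_dim m s")
    case True then show ?thesis using Suc by (meson less_SucI)
  next
    case False
    then have "off s m \<le> k" "k < off s m + s m" using Suc.prems by (auto simp: wp_dim_off off_Suc)
    then show ?thesis by (intro exI[of _ m]) (auto intro!: exI[of _ "k - off s m"])
  qed
qed

lemma sum_split:
  "(\<Sum>k<wp_dim m s. F k) = F 0 + (\<Sum>l<m. \<Sum>c<s l. F (off s l + c))"
proof (induction m)
  case 0 then show ?case by (simp add: wp_dim_def)
next
  case (Suc m)
  have "wp_dim (Suc m) s = wp_dim m s + s m" by (simp add: wp_dim_def)
  then show ?case using Suc by (simp add: sum_lessThan_add wp_dim_off add.assoc)
qed

lemma sum_single_block:
  assumes "l < (m::nat)" "\<And>l' e. l' < m \<Longrightarrow> e < s l' \<Longrightarrow> l' \<noteq> l \<Longrightarrow> F l' e = 0"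
  shows "(\<Sum>l'<m. \<Sum>e<s l'. F l' e) = (\<Sum>e<s l. F l e)"
proof -
  have "(\<Sum>l'<m. \<Sum>e<s l'. F l' e) = (\<Sum>e<s l. F l e) + (\<Sum>l'\<in>{..<m} - {l}. \<Sum>e<s l'. F l' e)"
    by (rule sum.remove) (use assms in auto)
  also have "(\<Sum>l'\<in>{..<m} - {l}. \<Sum>e<s l'. F l' e) = 0"
    by (rule sum.neutral) (use assms in auto)
  finally show ?thesis by simp
qed

lemma fib_apply: "c < s l \<Longrightarrow> fib_proj s l x c = x (off s l + c)"
  by (simp add: fib_proj_def)

lemma fib_upd0: "fib_proj s l (x(0 := v)) = fib_proj s l x"
  using off_ge1[of s l] by (auto simp: fib_proj_def)

lemma fib_upd_same: "c < s l \<Longrightarrow> fib_proj s l (x(off s l + c := v)) = (fib_proj s l x)(c := v)"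
  by (auto simp: fib_proj_def)

lemma fib_upd_other:
  assumes "l < m" "l' < m" "l \<noteq> l'" "c < s l'"
  shows "fib_proj s l (x(off s l' + c := v)) = fib_proj s l x"
proof -
  have "off s l + k \<noteq> off s l' + c" if "k < s l" for k
    using blk_unique[of l' m c s l] assms that assms(3) by auto
  then show ?thesis by (auto simp: fib_proj_def)
qed


lemma off_inj:
  assumes "l < m" "c < s l" "l' < m" "d < s l'" "off s l + c = off s l' + d"
  shows "l = l' \<and> c = d"
  using blk_unique[of l m c s l'] assms by auto

lemma off_ne0: "off s l + c \<noteq> 0" using off_ge1[of s l] by linarith

lemma off_lt_dim: "l < m \<Longrightarrow> c < s l \<Longrightarrow> off s l + c < wp_dim m s"
  using off_le_dim[of l m s] by linarith

lemma wp_00: "wp_metric m s g \<phi> p x 0 0 = -1"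
  by (simp add: wp_metric_def)

lemma wp_0b: "wp_metric m s g \<phi> p x 0 (off s l + c) = 0"
  by (simp add: wp_metric_def off_def)

lemma wp_a0: "wp_metric m s g \<phi> p x (off s l + c) 0 = 0"
  by (simp add: wp_metric_def off_def)

lemma wp_ab:
  assumes "l < m" "c < s l" "l' < m" "d < s l'"
  shows "wp_metric m s g \<phi> p x (off s l + c) (off s l' + d) =
     (if l = l' then \<phi> (x 0) powr (2 * p l) * g l (fib_proj s l x) c d else 0)"
proof (cases "l = l'")
  case True
  have c: "\<exists>i<m. off s i \<le> off s l + c \<and> off s l + c < off s i + s i \<and>
        off s i \<le> off s l' + d \<and> off s l' + d < off s i + s i"
    using assms True by (intro exI[of _ l]) auto
  have t: "(THE i. i < m \<and> off s i \<le> off s l + c \<and> off s l + c < off s i + s i) = l"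
    by (rule the_blk) (use assms in auto)
  have z: "\<not> (off s l + c = 0 \<and> off s l' + d = 0)" using off_ne0[of s l c] by blast
  show ?thesis unfolding wp_metric_def if_not_P[OF z] if_P[OF c] t Let_def using True by simp
next
  case False
  have "\<not> (\<exists>i<m. off s i \<le> off s l + c \<and> off s l + c < off s i + s i \<and>
          off s i \<le> off s l' + d \<and> off s l' + d < off s i + s i)"
  proof
    assume "\<exists>i<m. off s i \<le> off s l + c \<and> off s l + c < off s i + s i \<and>
          off s i \<le> off s l' + d \<and> off s l' + d < off s i + s i"
    then obtain i where "i < m" "off s i \<le> off s l + c" "off s l + c < off s i + s i"
          "off s i \<le> off s l' + d" "off s l' + d < off s i + s i" by blast
    then have "i = l" "i = l'" using blk_unique[of l m c s i] blk_unique[of l' m d s i] assms by auto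
    then show False using False by simp
  qed
  moreover have "\<not> (off s l + c = 0 \<and> off s l' + d = 0)" using off_ne0[of s l c] by blast
  ultimately show ?thesis using False unfolding wp_metric_def
    by (simp only: if_not_P if_False)
qed

lemma wp_outside:
  assumes "A \<ge> wp_dim m s \<or> B \<ge> wp_dim m s"
  shows "wp_metric m s g \<phi> p x A B = 0"
proof -
  have "\<not> (\<exists>i<m. off s i \<le> A \<and> A < off s i + s i \<and> off s i \<le> B \<and> B < off s i + s i)"
  proof
    assume "\<exists>i<m. off s i \<le> A \<and> A < off s i + s i \<and> off s i \<le> B \<and> B < off s i + s i"
    then obtain i where "i < m" "A < off s i + s i" "B < off s i + s i" by blast
    then show False using assms off_le_dim[of i m s] by linarith
  qed
  moreover have "\<not> (A = 0 \<and> B = 0)" using assms by (auto simp: wp_dim_def)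
  ultimately show ?thesis unfolding wp_metric_def
    by (simp only: if_not_P if_False)
qed

lemma wp_sym: "(\<forall>i j. g l x i j = g l x j i) \<Longrightarrow> True" by simp

lemma inv_core:
  assumes sym: "\<And>i j. i < n \<Longrightarrow> j < n \<Longrightarrow> A i j = A j i"
    and B: "is_inverse_mat n A B" and B': "is_inverse_mat n A B'"
  shows "B' i j = B j i"
proof (cases "i < n \<and> j < n")
  case True
  then have i: "i < n" and j: "j < n" by auto
  have "(\<Sum>k<n. (if i = k then 1 else 0) * B' k j) = (\<Sum>k<n. if i = k then B' k j else 0)"
    by (intro sum.cong) auto
  then have "B' i j = (\<Sum>k<n. (if i = k then 1 else 0) * B' k j)"
    using i by simp
  also have "\<dots> = (\<Sum>k<n. (\<Sum>l<n. A k l * B l i) * B' k j)"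
    using B i by (intro sum.cong refl) (auto simp: is_inverse_mat_def)
  also have "\<dots> = (\<Sum>l<n. B l i * (\<Sum>k<n. A l k * B' k j))"
  proof -
    have "(\<Sum>k<n. (\<Sum>l<n. A k l * B l i) * B' k j) = (\<Sum>k<n. \<Sum>l<n. B l i * (A l k * B' k j))"
      by (intro sum.cong refl) (auto simp: sum_distrib_right sum_distrib_left sym mult_ac intro!: sum.cong)
    also have "\<dots> = (\<Sum>l<n. \<Sum>k<n. B l i * (A l k * B' k j))" by (rule sum.swap)
    also have "\<dots> = (\<Sum>l<n. B l i * (\<Sum>k<n. A l k * B' k j))" by (simp add: sum_distrib_left)
    finally show ?thesis .
  qed
  also have "\<dots> = (\<Sum>l<n. B l i * (if l = j then 1 else 0))"
    using B' j by (intro sum.cong refl) (auto simp: is_inverse_mat_def)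
  also have "\<dots> = (\<Sum>l<n. if l = j then B l i else 0)"
    by (intro sum.cong) auto
  also have "\<dots> = B j i" using j by simp
  finally show ?thesis .
next
  case False
  then show ?thesis using B B' by (auto simp: is_inverse_mat_def)
qed

lemma inv_unique:
  assumes sym: "\<And>i j. i < n \<Longrightarrow> j < n \<Longrightarrow> A i j = A j i"
    and B: "is_inverse_mat n A B" and B': "is_inverse_mat n A B'"
  shows "B' = B"
proof (intro ext)
  fix i j
  have "B' i j = B j i" by (rule inv_core[OF sym B B'])
  moreover have "B j i = B i j" by (rule inv_core[OF sym B B])
  ultimately show "B' i j = B i j" by (rule trans)
qed

lemma inv_the:
  assumes sym: "\<And>i j. i < n \<Longrightarrow> j < n \<Longrightarrow> A i j = A j i"
    and B: "is_inverse_mat n A B"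
  shows "(THE B. is_inverse_mat n A B) = B"
proof (rule the_equality)
  show "is_inverse_mat n A B" by (rule B)
  fix B' assume "is_inverse_mat n A B'"
  then show "B' = B" by (metis inv_unique[OF sym B])
qed

lemma inv_sym:
  assumes sym: "\<And>i j. i < n \<Longrightarrow> j < n \<Longrightarrow> A i j = A j i"
    and B: "is_inverse_mat n A B"
  shows "B i j = B j i"
  using inv_core[OF sym B B] .

lemma inv_left:
  assumes sym: "\<And>i j. i < n \<Longrightarrow> j < n \<Longrightarrow> A i j = A j i"
    and B: "is_inverse_mat n A B" and "i < n" "j < n"
  shows "(\<Sum>k<n. B i k * A k j) = (if i = j then 1 else 0)"
proof -
  have "(\<Sum>k<n. B i k * A k j) = (\<Sum>k<n. A j k * B k i)"
  proof (intro sum.cong refl)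
    fix k assume "k \<in> {..<n}"
    then have "A k j = A j k" using sym assms(3,4) by auto
    moreover have "B i k = B k i" by (rule inv_sym[OF sym B])
    ultimately show "B i k * A k j = A j k * B k i" by simp
  qed
  also have "\<dots> = (if j = i then 1 else 0)" using B assms(3,4) unfolding is_inverse_mat_def by auto
  finally show ?thesis by auto
qed


lemma off_nz[simp]: "off s l \<noteq> 0" using off_ge1[of s l] by linarith

lemma upd_off_0: "(x(off s l + c := v)) 0 = x 0"
  by simp

lemma DERIV_at0_shift: "DERIV A t :> A' \<Longrightarrow> DERIV (\<lambda>h. A (t + h)) 0 :> A'"
  using DERIV_shift[of A A' 0 t] by (simp add: add.commute)

lemma DERIV_sep_0:
  assumes "DERIV A (x 0) :> A'"
  shows "DERIV (\<lambda>h. A ((x(0 := x 0 + h)) 0) * B (fib_proj s l (x(0 := x 0 + h)))) 0 :> A' * B (fib_proj s l x)"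
  using DERIV_cmult_right[OF DERIV_at0_shift[OF assms], of "B (fib_proj s l x)"] by (simp add: fib_upd0)

lemma DERIV_sep_same:
  assumes "c < s l" "DERIV (\<lambda>h. B ((fib_proj s l x)(c := fib_proj s l x c + h))) 0 :> B'"
  shows "DERIV (\<lambda>h. A ((x(off s l + c := x (off s l + c) + h)) 0) * B (fib_proj s l (x(off s l + c := x (off s l + c) + h)))) 0 :> A (x 0) * B'"
  using DERIV_cmult[OF assms(2), of "A (x 0)"] assms(1) by (simp add: upd_off_0 fib_upd_same fib_apply)

lemma DERIV_sep_other:
  assumes "l < m" "l' < m" "l \<noteq> l'" "c < s l'"
  shows "DERIV (\<lambda>h. A ((x(off s l' + c := x (off s l' + c) + h)) 0) * B (fib_proj s l (x(off s l' + c := x (off s l' + c) + h)))) 0 :> 0"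
  using assms by (simp add: upd_off_0 fib_upd_other[where s=s and l=l and l'=l' and c=c and m=m, OF assms])

lemma DERIV_time_0:
  assumes "DERIV A (x 0) :> A'"
  shows "DERIV (\<lambda>h. A ((x(0 := x 0 + h)) 0)) 0 :> A'"
  using DERIV_at0_shift[OF assms] by simp

lemma DERIV_time_off:
  shows "DERIV (\<lambda>h. A ((x(off s l + c := x (off s l + c) + h)) 0)) 0 :> 0"
  by (simp add: upd_off_0)

lemma DERIV_fib_0:
  shows "DERIV (\<lambda>h. B (fib_proj s l (x(0 := x 0 + h)))) 0 :> 0"
  by (simp add: fib_upd0)

lemma DERIV_fib_same:
  assumes "c < s l" "DERIV (\<lambda>h. B ((fib_proj s l x)(c := fib_proj s l x c + h))) 0 :> B'"
  shows "DERIV (\<lambda>h. B (fib_proj s l (x(off s l + c := x (off s l + c) + h)))) 0 :> B'"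
  using assms by (simp add: fib_upd_same fib_apply)

lemma DERIV_fib_other:
  assumes "l < m" "l' < m" "l \<noteq> l'" "c < s l'"
  shows "DERIV (\<lambda>h. B (fib_proj s l (x(off s l' + c := x (off s l' + c) + h)))) 0 :> 0"
  using assms by (simp add: fib_upd_other[where s=s and l=l and l'=l' and c=c and m=m, OF assms])

lemma pd_DERIV:
  assumes "(\<lambda>h. f (x(k := x k + h))) differentiable (at 0)"
  shows "DERIV (\<lambda>h. f (x(k := x k + h))) 0 :> pd k f x"
  using assms unfolding pd_def by (simp add: DERIV_deriv_iff_real_differentiable)

locale wp =
  fixes m :: nat and s :: "nat \<Rightarrow> nat" and U :: "nat \<Rightarrow> (nat \<Rightarrow> real) set"
    and g :: "nat \<Rightarrow> metric" and p :: "nat \<Rightarrow> real" and \<zeta> a b :: real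
  assumes fibres: "\<forall>i<m. riem_metric (s i) (U i) (g i) \<and> ricci_flat_on (s i) (U i) (g i)"
    and zeta: "\<zeta> = (\<Sum>l<m. real (s l) * p l)"
    and eta: "(\<Sum>l<m. real (s l) * (p l)\<^sup>2) = \<zeta>\<^sup>2"
    and znz: "\<zeta> \<noteq> 0"
    and a0: "a \<ge> 0" and b0: "b \<ge> 0" and ab: "a\<^sup>2 + b\<^sup>2 > 0"
begin

abbreviation "n \<equiv> wp_dim m s"
abbreviation "W \<equiv> wp_domain m s U"
abbreviation "fib \<equiv> fib_proj s"
definition "G = wp_metric m s g (\<lambda>t. (a * t + b) powr (1 / \<zeta>)) p"
definition "T l t = (a * t + b) powr (2 * p l / \<zeta>)"
definition "H t = a / (\<zeta> * (a * t + b))"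

lemma pos: "t > 0 \<Longrightarrow> a * t + b > 0"
proof -
  assume t: "t > 0"
  show ?thesis
  proof (cases "a = 0")
    case True then have "b \<noteq> 0" using ab by auto
    then show ?thesis using True b0 by simp
  next
    case False then have "a * t > 0" using a0 t by simp
    then show ?thesis using b0 by linarith
  qed
qed

lemma T_pos: assumes "t > 0" shows "T l t > 0"
  using pos[OF assms] by (simp add: T_def)

lemma phi_T: "t > 0 \<Longrightarrow> ((a * t + b) powr (1 / \<zeta>)) powr (2 * p l) = T l t"
  using pos[of t] by (simp add: T_def powr_powr)

lemma DERIV_T: "t > 0 \<Longrightarrow> DERIV (T l) t :> 2 * p l * H t * T l t"
proof -
  assume t: "t > 0"
  have q: "a * t + b > 0" using pos[OF t] .
  have "DERIV (\<lambda>t. (a * t + b) powr (2 * p l / \<zeta>)) t :> (2 * p l / \<zeta>) * (a * t + b) powr (2 * p l / \<zeta> - 1) * a"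
    using q by (auto intro!: derivative_eq_intros)
  moreover have "(2 * p l / \<zeta>) * (a * t + b) powr (2 * p l / \<zeta> - 1) * a = 2 * p l * H t * T l t"
  proof -
    have e: "(a * t + b) powr (2 * p l / \<zeta> - 1) = T l t / (a * t + b)"
      using q by (simp add: T_def powr_diff)
    have "a * t + b \<noteq> 0" using q by simp
    then show ?thesis unfolding e H_def using znz by (simp add: field_simps)
  qed
  ultimately show ?thesis unfolding T_def by simp
qed

lemma DERIV_H: "t > 0 \<Longrightarrow> DERIV H t :> - \<zeta> * (H t)\<^sup>2"
proof -
  assume t: "t > 0"
  have q: "a * t + b > 0" using pos[OF t] .
  show ?thesis unfolding H_def
  proof -
    have nz: "\<zeta> * (a * t + b) \<noteq> 0" using q znz by simp
    show "DERIV (\<lambda>t. a / (\<zeta> * (a * t + b))) t :> - \<zeta> * (a / (\<zeta> * (a * t + b)))\<^sup>2"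
      using nz by (auto intro!: derivative_eq_intros simp: field_simps power2_eq_square)
  qed
qed

end

lemma idx_cases:
  assumes "k < wp_dim m s"
  obtains "k = 0" | l c where "l < m" "c < s l" "k = off s l + c"
  using decomp[OF assms] by blast

context wp
begin

lemma fib_riem: "l < m \<Longrightarrow> riem_metric (s l) (U l) (g l)"
  using fibres by auto

lemma fib_semi: "l < m \<Longrightarrow> semi_riem_metric (s l) (U l) (g l)"
  using fib_riem by (auto simp: riem_metric_def)

lemma fib_sym: "l < m \<Longrightarrow> y \<in> U l \<Longrightarrow> g l y i j = g l y j i"
  using fib_semi by (auto simp: semi_riem_metric_def)

definition "ginv l y = inv_metric (s l) (g l) y"

lemma fib_inv: assumes "l < m" "y \<in> U l" shows "is_inverse_mat (s l) (g l y) (ginv l y)"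
proof -
  obtain B where B: "is_inverse_mat (s l) (g l y) B" using fib_semi[OF assms(1)] assms(2)
    by (auto simp: semi_riem_metric_def)
  have "ginv l y = B" unfolding ginv_def inv_metric_def
    by (rule inv_the[OF _ B]) (use fib_sym assms in auto)
  then show ?thesis using B by simp
qed

lemma ginv_sym: "l < m \<Longrightarrow> y \<in> U l \<Longrightarrow> ginv l y i j = ginv l y j i"
  by (rule inv_sym[OF _ fib_inv]) (auto simp: fib_sym)

lemma ginv_left: "l < m \<Longrightarrow> y \<in> U l \<Longrightarrow> i < s l \<Longrightarrow> j < s l \<Longrightarrow>
   (\<Sum>k<s l. ginv l y i k * g l y k j) = (if i = j then 1 else 0)"
  by (rule inv_left[OF _ fib_inv]) (auto simp: fib_sym)

lemma ginv_right: "l < m \<Longrightarrow> y \<in> U l \<Longrightarrow> i < s l \<Longrightarrow> j < s l \<Longrightarrow>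
   (\<Sum>k<s l. g l y i k * ginv l y k j) = (if i = j then 1 else 0)"
  using fib_inv by (auto simp: is_inverse_mat_def)

lemma fib_smooth: "l < m \<Longrightarrow> i < s l \<Longrightarrow> j < s l \<Longrightarrow> smooth_on (s l) (U l) (\<lambda>y. g l y i j)"
  using fib_semi by (auto simp: semi_riem_metric_def)

lemma fib_DERIV:
  assumes "l < m" "y \<in> U l" "c < s l" "i < s l" "j < s l"
  shows "DERIV (\<lambda>h. g l (y(c := y c + h)) i j) 0 :> pd c (\<lambda>z. g l z i j) y"
proof -
  have "(\<lambda>h. ipd [] (\<lambda>y. g l y i j) (y(c := y c + h))) differentiable (at 0)"
    using fib_smooth[OF assms(1,4,5)] assms(2,3) unfolding smooth_on_def by (auto dest!: spec[of _ "[]"])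
  then show ?thesis by (intro pd_DERIV) simp
qed

lemma W_D: "x \<in> W \<Longrightarrow> x 0 > 0 \<and> x \<in> coord_space n \<and> (\<forall>l<m. fib l x \<in> U l)"
  by (simp add: wp_domain_def)

lemma fib_coord: "fib l y \<in> coord_space (s l)"
  by (simp add: fib_proj_def coord_space_def)

lemma fib_cont: "continuous_on S (fib l)"
proof (intro continuous_on_coordinatewise_then_product)
  fix k show "continuous_on S (\<lambda>y. fib l y k)"
    by (cases "k < s l") (auto simp: fib_proj_def intro!: continuous_intros continuous_on_product_then_coordinatewise[OF continuous_on_id])
qed

lemma W_open: "openin (top_of_set (coord_space n)) W"
proof -
  have "\<forall>l. \<exists>V. l < m \<longrightarrow> open V \<and> U l = coord_space (s l) \<inter> V"
    using fib_semi by (auto simp: semi_riem_metric_def openin_open)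
  then obtain V where V: "\<And>l. l < m \<Longrightarrow> open (V l) \<and> U l = coord_space (s l) \<inter> V l"
    by metis
  let ?O = "{y. y 0 > 0} \<inter> (\<Inter>l\<in>{..<m}. fib l -` V l)"
  have "open {y::nat\<Rightarrow>real. y 0 > 0}"
    using open_vimage[OF open_greaterThan continuous_on_product_coordinates, of 0 0]
    by (simp add: vimage_def greaterThan_def)
  moreover have "open (\<Inter>l\<in>{..<m}. fib l -` V l)"
    using V by (intro open_INT) (auto intro!: open_vimage fib_cont)
  ultimately have "open ?O" by auto
  moreover have "W = coord_space n \<inter> ?O"
    using V fib_coord by (auto simp: wp_domain_def)
  ultimately show ?thesis by (auto simp: openin_open)
qed

lemma W_cong: "x \<in> W \<Longrightarrow> k < n \<Longrightarrow> (\<And>y. y \<in> W \<Longrightarrow> f y = f' y) \<Longrightarrow> pd k f x = pd k f' x"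
  by (rule pd_cong[OF W_open])

lemma G00: "G x 0 0 = -1" by (simp add: G_def wp_00)
lemma G0b: "G x 0 (off s l + c) = 0" by (simp add: G_def wp_0b)
lemma Ga0: "G x (off s l + c) 0 = 0" by (simp add: G_def wp_a0)
lemma Gab: "l < m \<Longrightarrow> c < s l \<Longrightarrow> l' < m \<Longrightarrow> d < s l' \<Longrightarrow> x 0 > 0 \<Longrightarrow>
  G x (off s l + c) (off s l' + d) = (if l = l' then T l (x 0) * g l (fib l x) c d else 0)"
  by (simp add: G_def wp_ab phi_T)
lemma Gab_ne: "l < m \<Longrightarrow> c < s l \<Longrightarrow> l' < m \<Longrightarrow> d < s l' \<Longrightarrow> l \<noteq> l' \<Longrightarrow>
  G x (off s l + c) (off s l' + d) = 0"
  by (simp add: G_def wp_ab)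

definition "Ginv = wp_metric m s ginv (\<lambda>t. (a * t + b) powr (- 1 / \<zeta>)) p"

lemma Ginv00: "Ginv x 0 0 = -1" by (simp add: Ginv_def wp_00)
lemma Ginv0b: "Ginv x 0 (off s l + c) = 0" by (simp add: Ginv_def wp_0b)
lemma Ginva0: "Ginv x (off s l + c) 0 = 0" by (simp add: Ginv_def wp_a0)
lemma Ginvab: "l < m \<Longrightarrow> c < s l \<Longrightarrow> l' < m \<Longrightarrow> d < s l' \<Longrightarrow> x 0 > 0 \<Longrightarrow>
  Ginv x (off s l + c) (off s l' + d) = (if l = l' then ginv l (fib l x) c d / T l (x 0) else 0)"
proof -
  assume *: "l < m" "c < s l" "l' < m" "d < s l'" "x 0 > 0"
  have e: "((a * x 0 + b) powr (- (1 / \<zeta>))) powr (2 * p l) = 1 / T l (x 0)" for l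
  proof -
    have "((a * x 0 + b) powr (- (1 / \<zeta>))) powr (2 * p l) = (a * x 0 + b) powr ((- (1 / \<zeta>)) * (2 * p l))"
      by (simp add: powr_powr)
    also have "(- (1 / \<zeta>)) * (2 * p l) = - (2 * p l / \<zeta>)" by simp
    also have "(a * x 0 + b) powr (- (2 * p l / \<zeta>)) = 1 / T l (x 0)"
      by (simp add: T_def powr_minus divide_inverse)
    finally show ?thesis .
  qed
  show ?thesis using * by (simp add: Ginv_def wp_ab e)
qed

end

context wp
begin

lemma W_pos: "x \<in> W \<Longrightarrow> x 0 > 0" using W_D by auto
lemma W_fib: "x \<in> W \<Longrightarrow> l < m \<Longrightarrow> fib l x \<in> U l" using W_D by auto

lemma G_outside: "i \<ge> n \<or> j \<ge> n \<Longrightarrow> G x i j = 0"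
  by (simp add: G_def wp_outside)

lemma Ginv_outside: "i \<ge> n \<or> j \<ge> n \<Longrightarrow> Ginv x i j = 0"
  by (simp add: Ginv_def wp_outside)

lemma G_sym: assumes x: "x \<in> W" shows "G x i j = G x j i"
proof (cases "i < n \<and> j < n")
  case True
  then have i: "i < n" and j: "j < n" by auto
  show ?thesis
  proof (cases rule: idx_cases[OF i])
    case 1
    then show ?thesis by (cases rule: idx_cases[OF j]) (auto simp: G00 G0b Ga0)
  next
    case (2 l c)
    then show ?thesis
    proof (cases rule: idx_cases[OF j])
      case 1 then show ?thesis using 2 by (simp add: G0b Ga0)
    next
      case (2 l' d)
      then show ?thesis using \<open>l < m\<close> \<open>c < s l\<close> \<open>i = off s l + c\<close> W_pos[OF x] W_fib[OF x]
        by (auto simp: Gab fib_sym)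
    qed
  qed
next
  case False then show ?thesis by (auto simp: G_outside)
qed

lemma Ginv_right_block:
  assumes x: "x \<in> W" and l: "l < m" "c < s l" and l': "l' < m" "d < s l'"
  shows "(\<Sum>k<n. G x (off s l + c) k * Ginv x k (off s l' + d)) =
         (if off s l + c = off s l' + d then 1 else 0)"
proof -
  have x0: "x 0 > 0" using W_pos[OF x] .
  have "(\<Sum>k<n. G x (off s l + c) k * Ginv x k (off s l' + d)) =
      (\<Sum>l2<m. \<Sum>e<s l2. G x (off s l + c) (off s l2 + e) * Ginv x (off s l2 + e) (off s l' + d))"
    by (simp add: sum_split Ga0)
  also have "\<dots> = (\<Sum>e<s l. G x (off s l + c) (off s l + e) * Ginv x (off s l + e) (off s l' + d))"
    by (rule sum_single_block) (use l in \<open>auto simp: Gab_ne\<close>)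
  also have "\<dots> = (\<Sum>e<s l. T l (x 0) * g l (fib l x) c e * (if l = l' then ginv l (fib l x) e d / T l (x 0) else 0))"
    using l l' x0 by (intro sum.cong refl) (auto simp: Gab Ginvab)
  also have "\<dots> = (if off s l + c = off s l' + d then 1 else 0)"
  proof (cases "l = l'")
    case True
    have "(\<Sum>e<s l. T l (x 0) * g l (fib l x) c e * (ginv l (fib l x) e d / T l (x 0))) =
          (\<Sum>e<s l. g l (fib l x) c e * ginv l (fib l x) e d)"
      using T_pos[OF x0, of l] by (intro sum.cong refl) simp
    also have "\<dots> = (if c = d then 1 else 0)"
      using ginv_right[OF l(1) W_fib[OF x l(1)] l(2), of d] l' True by simp
    finally show ?thesis using True by simp
  next
    case False
    then have "off s l + c \<noteq> off s l' + d" using off_inj[OF l l'] by blast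
    then show ?thesis using False by simp
  qed
  finally show ?thesis .
qed

lemma Ginv_inv: assumes x: "x \<in> W" shows "is_inverse_mat n (G x) (Ginv x)"
  unfolding is_inverse_mat_def
proof (intro conjI allI impI)
  fix i j assume i: "i < n" and j: "j < n"
  have x0: "x 0 > 0" using W_pos[OF x] .
  show "(\<Sum>k<n. G x i k * Ginv x k j) = (if i = j then 1 else 0)"
  proof (cases rule: idx_cases[OF i])
    case 1
    then show ?thesis
      by (cases rule: idx_cases[OF j]) (auto simp: sum_split G00 G0b Ginv00 Ginv0b Ginva0)
  next
    case (2 l c)
    then show ?thesis
    proof (cases rule: idx_cases[OF j])
      case 1
      have "(\<Sum>l2<m. \<Sum>e<s l2. G x (off s l + c) (off s l2 + e) * Ginv x (off s l2 + e) 0) = 0"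
        by (simp add: Ginva0)
      then show ?thesis using 1 2 by (simp add: sum_split Ga0 Ginv00)
    next
      case (2 l' d)
      then show ?thesis using Ginv_right_block[OF x \<open>l < m\<close> \<open>c < s l\<close> 2(1,2)] \<open>i = off s l + c\<close> by simp
    qed
  qed
next
  fix i j :: nat assume "n \<le> i \<or> n \<le> j"
  then show "Ginv x i j = 0" by (rule Ginv_outside)
qed

lemma inv_G: assumes x: "x \<in> W" shows "inv_metric n G x = Ginv x"
  unfolding inv_metric_def
  by (rule inv_the[OF _ Ginv_inv[OF x]]) (simp add: G_sym[OF x])

lemma pdG00: "pd k (\<lambda>y. G y 0 0) x = 0" by (simp add: G00)
lemma pdG0b: "pd k (\<lambda>y. G y 0 (off s l + c)) x = 0" by (simp add: G0b)
lemma pdGa0: "pd k (\<lambda>y. G y (off s l + c) 0) x = 0" by (simp add: Ga0)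
lemma pdG_ne: "l < m \<Longrightarrow> c < s l \<Longrightarrow> l' < m \<Longrightarrow> d < s l' \<Longrightarrow> l \<noteq> l' \<Longrightarrow>
   pd k (\<lambda>y. G y (off s l + c) (off s l' + d)) x = 0"
  by (simp add: Gab_ne)

lemma G_same_W: "l < m \<Longrightarrow> c < s l \<Longrightarrow> d < s l \<Longrightarrow> y \<in> W \<Longrightarrow>
   G y (off s l + c) (off s l + d) = T l (y 0) * g l (fib l y) c d"
  by (simp add: Gab W_pos)

lemma pdG_same_0:
  assumes x: "x \<in> W" and l: "l < m" "c < s l" "d < s l"
  shows "pd 0 (\<lambda>y. G y (off s l + c) (off s l + d)) x = 2 * p l * H (x 0) * T l (x 0) * g l (fib l x) c d"
proof -
  have "pd 0 (\<lambda>y. G y (off s l + c) (off s l + d)) x = pd 0 (\<lambda>y. T l (y 0) * g l (fib l y) c d) x"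
    by (rule W_cong[OF x]) (auto simp: wp_dim_def G_same_W l)
  also have "\<dots> = 2 * p l * H (x 0) * T l (x 0) * g l (fib l x) c d"
    by (rule pdI) (rule DERIV_sep_0[where A="T l" and B="\<lambda>z. g l z c d" and s=s and l=l and x=x, OF DERIV_T[OF W_pos[OF x], of l]])
  finally show ?thesis .
qed

lemma pdG_same_same:
  assumes x: "x \<in> W" and l: "l < m" "c < s l" "d < s l" "e < s l"
  shows "pd (off s l + e) (\<lambda>y. G y (off s l + c) (off s l + d)) x = T l (x 0) * pd e (\<lambda>z. g l z c d) (fib l x)"
proof -
  have "pd (off s l + e) (\<lambda>y. G y (off s l + c) (off s l + d)) x = pd (off s l + e) (\<lambda>y. T l (y 0) * g l (fib l y) c d) x"
    by (rule W_cong[OF x]) (auto simp: off_lt_dim G_same_W l)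
  also have "\<dots> = T l (x 0) * pd e (\<lambda>z. g l z c d) (fib l x)"
    by (rule pdI) (rule DERIV_sep_same[where A="T l" and B="\<lambda>z. g l z c d" and s=s and l=l and c=e and x=x, OF l(4) fib_DERIV[OF l(1) W_fib[OF x l(1)] l(4,2,3)]])
  finally show ?thesis .
qed

lemma pdG_same_other:
  assumes x: "x \<in> W" and l: "l < m" "c < s l" "d < s l" "l' < m" "e < s l'" "l \<noteq> l'"
  shows "pd (off s l' + e) (\<lambda>y. G y (off s l + c) (off s l + d)) x = 0"
proof -
  have "pd (off s l' + e) (\<lambda>y. G y (off s l + c) (off s l + d)) x = pd (off s l' + e) (\<lambda>y. T l (y 0) * g l (fib l y) c d) x"
    by (rule W_cong[OF x]) (auto simp: off_lt_dim G_same_W l)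
  also have "\<dots> = 0"
    by (rule pdI) (rule DERIV_sep_other[where A="T l" and B="\<lambda>z. g l z c d" and s=s and l=l and l'=l' and c=e and m=m and x=x, OF l(1,4,6,5)])
  finally show ?thesis .
qed

end

context wp
begin

abbreviation "\<Gamma> \<equiv> christoffel n G"
abbreviation "\<Gamma>F l \<equiv> christoffel (s l) (g l)"

lemma pdG_x0: "J < n \<Longrightarrow> pd k (\<lambda>y. G y J 0) x = 0"
  by (cases rule: idx_cases) (auto simp: pdG00 pdGa0)
lemma pdG_0x: "J < n \<Longrightarrow> pd k (\<lambda>y. G y 0 J) x = 0"
  by (cases rule: idx_cases) (auto simp: pdG00 pdG0b)

lemma chr_expand: "x \<in> W \<Longrightarrow> \<Gamma> K I J x = 1/2 * (\<Sum>L<n. Ginv x K L *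
   (pd I (\<lambda>y. G y J L) x + pd J (\<lambda>y. G y I L) x - pd L (\<lambda>y. G y I J) x))"
  by (simp add: christoffel_def inv_G)

lemma chr0: "x \<in> W \<Longrightarrow> I < n \<Longrightarrow> J < n \<Longrightarrow> \<Gamma> 0 I J x = 1/2 * pd 0 (\<lambda>y. G y I J) x"
  by (simp add: chr_expand sum_split Ginv00 Ginv0b pdG_x0)

lemma chrA:
  assumes x: "x \<in> W" and l: "l < m" "c < s l"
  shows "\<Gamma> (off s l + c) I J x = 1/2 * (\<Sum>d<s l. ginv l (fib l x) c d / T l (x 0) *
   (pd I (\<lambda>y. G y J (off s l + d)) x + pd J (\<lambda>y. G y I (off s l + d)) x - pd (off s l + d) (\<lambda>y. G y I J) x))"
proof -
  have "\<Gamma> (off s l + c) I J x = 1/2 * (\<Sum>l2<m. \<Sum>d<s l2. Ginv x (off s l + c) (off s l2 + d) *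
   (pd I (\<lambda>y. G y J (off s l2 + d)) x + pd J (\<lambda>y. G y I (off s l2 + d)) x - pd (off s l2 + d) (\<lambda>y. G y I J) x))"
    using x by (simp add: chr_expand sum_split Ginva0)
  also have "(\<Sum>l2<m. \<Sum>d<s l2. Ginv x (off s l + c) (off s l2 + d) *
   (pd I (\<lambda>y. G y J (off s l2 + d)) x + pd J (\<lambda>y. G y I (off s l2 + d)) x - pd (off s l2 + d) (\<lambda>y. G y I J) x))
   = (\<Sum>d<s l. Ginv x (off s l + c) (off s l + d) *
   (pd I (\<lambda>y. G y J (off s l + d)) x + pd J (\<lambda>y. G y I (off s l + d)) x - pd (off s l + d) (\<lambda>y. G y I J) x))"
    by (rule sum_single_block) (use l W_pos[OF x] in \<open>auto simp: Ginvab\<close>)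
  also have "\<dots> = (\<Sum>d<s l. ginv l (fib l x) c d / T l (x 0) *
   (pd I (\<lambda>y. G y J (off s l + d)) x + pd J (\<lambda>y. G y I (off s l + d)) x - pd (off s l + d) (\<lambda>y. G y I J) x))"
    using l W_pos[OF x] by (intro sum.cong refl) (auto simp: Ginvab)
  finally show ?thesis .
qed

lemma n_pos: "0 < n" by (simp add: wp_dim_def)

lemma C000: "x \<in> W \<Longrightarrow> \<Gamma> 0 0 0 x = 0"
  using n_pos by (simp add: chr0 pdG00)
lemma C00b: "x \<in> W \<Longrightarrow> l < m \<Longrightarrow> c < s l \<Longrightarrow> \<Gamma> 0 0 (off s l + c) x = 0"
  using n_pos by (simp add: chr0 pdG0b off_lt_dim)
lemma C0a0: "x \<in> W \<Longrightarrow> l < m \<Longrightarrow> c < s l \<Longrightarrow> \<Gamma> 0 (off s l + c) 0 x = 0"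
  using n_pos by (simp add: chr0 pdGa0 off_lt_dim)
lemma C0ab: "x \<in> W \<Longrightarrow> l < m \<Longrightarrow> c < s l \<Longrightarrow> l' < m \<Longrightarrow> d < s l' \<Longrightarrow>
   \<Gamma> 0 (off s l + c) (off s l' + d) x = (if l = l' then p l * H (x 0) * T l (x 0) * g l (fib l x) c d else 0)"
  by (cases "l = l'") (simp_all add: chr0 off_lt_dim pdG_same_0 pdG_ne)

lemma CA00: "x \<in> W \<Longrightarrow> l < m \<Longrightarrow> c < s l \<Longrightarrow> \<Gamma> (off s l + c) 0 0 x = 0"
  by (simp add: chrA pdG0b pdGa0 pdG00)

lemma CA0b:
  assumes x: "x \<in> W" and l: "l < m" "c < s l" "l' < m" "d' < s l'"
  shows "\<Gamma> (off s l + c) 0 (off s l' + d') x = (if l = l' \<and> c = d' then p l * H (x 0) else 0)"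
proof (cases "l = l'")
  case True
  have "\<Gamma> (off s l + c) 0 (off s l' + d') x =
     1/2 * (\<Sum>d<s l. ginv l (fib l x) c d / T l (x 0) * (2 * p l * H (x 0) * T l (x 0) * g l (fib l x) d' d))"
    using True l x by (simp add: chrA pdG0b pdG_same_0)
  also have "\<dots> = p l * H (x 0) * (\<Sum>d<s l. ginv l (fib l x) c d * g l (fib l x) d d')"
    using T_pos[OF W_pos[OF x], of l] W_fib[OF x l(1)] l
    by (simp add: sum_distrib_left fib_sym[of l _ d'] mult_ac)
  also have "\<dots> = (if l = l' \<and> c = d' then p l * H (x 0) else 0)"
    using ginv_left[OF l(1) W_fib[OF x l(1)] l(2), of d'] True l by simp
  finally show ?thesis .
next
  case False
  then show ?thesis using l x by (simp add: chrA pdG0b pdG_ne pdGa0)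
qed

lemma CAb0:
  assumes x: "x \<in> W" and l: "l < m" "c < s l" "l' < m" "d' < s l'"
  shows "\<Gamma> (off s l + c) (off s l' + d') 0 x = (if l = l' \<and> c = d' then p l * H (x 0) else 0)"
proof -
  have "\<Gamma> (off s l + c) (off s l' + d') 0 x = \<Gamma> (off s l + c) 0 (off s l' + d') x"
    using x l by (simp only: chrA[OF x l(1,2)]) (simp add: pdG0b pdGa0)
  then show ?thesis using CA0b[OF assms] by simp
qed

lemma CAbc:
  assumes x: "x \<in> W" and l: "l < m" "c < s l" "l1 < m" "d1 < s l1" "l2 < m" "d2 < s l2"
  shows "\<Gamma> (off s l + c) (off s l1 + d1) (off s l2 + d2) x =
    (if l1 = l \<and> l2 = l then \<Gamma>F l c d1 d2 (fib l x) else 0)"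
proof (cases "l1 = l \<and> l2 = l")
  case True
  have "\<Gamma> (off s l + c) (off s l1 + d1) (off s l2 + d2) x =
     1/2 * (\<Sum>d<s l. ginv l (fib l x) c d / T l (x 0) * (T l (x 0) * pd d1 (\<lambda>z. g l z d2 d) (fib l x)
        + T l (x 0) * pd d2 (\<lambda>z. g l z d1 d) (fib l x) - T l (x 0) * pd d (\<lambda>z. g l z d1 d2) (fib l x)))"
    using True l x by (simp add: chrA pdG_same_same)
  also have "\<dots> = 1/2 * (\<Sum>d<s l. ginv l (fib l x) c d * (pd d1 (\<lambda>z. g l z d2 d) (fib l x)
        + pd d2 (\<lambda>z. g l z d1 d) (fib l x) - pd d (\<lambda>z. g l z d1 d2) (fib l x)))"
    using T_pos[OF W_pos[OF x], of l]
    by (intro arg_cong[where f="\<lambda>u. 1/2 * u"] sum.cong refl) (simp add: field_simps)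
  also have "\<dots> = \<Gamma>F l c d1 d2 (fib l x)"
    by (simp add: christoffel_def ginv_def)
  finally show ?thesis using True by simp
next
  case False
  have z1: "pd (off s la + da) (\<lambda>y. G y (off s lb + db) (off s l + d)) x = 0"
    if "d < s l" "la < m" "da < s la" "lb < m" "db < s lb" "\<not> (la = l \<and> lb = l)" for d la da lb db
  proof (cases "lb = l")
    case True
    then have "la \<noteq> l" using that by auto
    then show ?thesis unfolding True by (intro pdG_same_other[OF x]) (use that l True in auto)
  next
    case False
    then show ?thesis using that l by (intro pdG_ne) auto
  qed
  have z3: "pd (off s l + d) (\<lambda>y. G y (off s l1 + d1) (off s l2 + d2)) x = 0" if "d < s l" for d
  proof (cases "l1 = l2")
    case True
    then have "l1 \<noteq> l" using False by auto
    then show ?thesis unfolding True by (intro pdG_same_other[OF x]) (use that l True in auto)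
  next
    case False
    then show ?thesis using that l by (intro pdG_ne) auto
  qed
  have z: "pd (off s l1 + d1) (\<lambda>y. G y (off s l2 + d2) (off s l + d)) x = 0"
    "pd (off s l2 + d2) (\<lambda>y. G y (off s l1 + d1) (off s l + d)) x = 0"
    "pd (off s l + d) (\<lambda>y. G y (off s l1 + d1) (off s l2 + d2)) x = 0" if "d < s l" for d
    using z1[OF that l(3,4,5,6)] z1[OF that l(5,6,3,4)] z3[OF that] False by auto
  show ?thesis using False l x by (auto simp: chrA z)
qed

end

lemma pd_fib_same: "c < s l \<Longrightarrow> pd (off s l + c) (\<lambda>y. B (fib_proj s l y)) x = pd c B (fib_proj s l x)"
  unfolding pd_def by (simp add: fib_upd_same fib_apply)

lemma pd_fib_0: "pd 0 (\<lambda>y. B (fib_proj s l y)) x = 0"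
  by (rule pdI) (rule DERIV_fib_0)

lemma pd_fib_other: "l < m \<Longrightarrow> l' < m \<Longrightarrow> l \<noteq> l' \<Longrightarrow> c < s l' \<Longrightarrow> pd (off s l' + c) (\<lambda>y. B (fib_proj s l y)) x = 0"
  by (rule pdI) (rule DERIV_fib_other)

lemma pd_time_off: "pd (off s l + c) (\<lambda>y. A (y 0)) x = 0"
  by (rule pdI) (rule DERIV_time_off)

lemma pd_time_0: "DERIV A (x 0) :> A' \<Longrightarrow> pd 0 (\<lambda>y. A (y 0)) x = A'"
  by (rule pdI) (rule DERIV_time_0)

context wp
begin

lemma W_cong0: "x \<in> W \<Longrightarrow> k < n \<Longrightarrow> (\<And>y. y \<in> W \<Longrightarrow> f y = 0) \<Longrightarrow> pd k f x = 0"
  using W_cong[of x k f "\<lambda>y. 0"] by simp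

lemma P1: "x \<in> W \<Longrightarrow> k < n \<Longrightarrow> L < n \<Longrightarrow> pd k (\<Gamma> L 0 0) x = 0"
  by (rule W_cong0) (auto elim: idx_cases simp: C000 CA00)

lemma P2: "x \<in> W \<Longrightarrow> k < n \<Longrightarrow> l < m \<Longrightarrow> c < s l \<Longrightarrow> pd k (\<Gamma> 0 0 (off s l + c)) x = 0"
  "x \<in> W \<Longrightarrow> k < n \<Longrightarrow> l < m \<Longrightarrow> c < s l \<Longrightarrow> pd k (\<Gamma> 0 (off s l + c) 0) x = 0"
  by (rule W_cong0; auto simp: C00b C0a0)+

lemma P3: "x \<in> W \<Longrightarrow> k < n \<Longrightarrow> l < m \<Longrightarrow> c < s l \<Longrightarrow> l' < m \<Longrightarrow> d < s l' \<Longrightarrow> l \<noteq> l' \<Longrightarrow>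
   pd k (\<Gamma> 0 (off s l + c) (off s l' + d)) x = 0"
  by (rule W_cong0) (auto simp: C0ab)

lemma P4:
  assumes x: "x \<in> W" and l: "l < m" "c < s l" "d < s l"
  shows "pd 0 (\<Gamma> 0 (off s l + c) (off s l + d)) x =
     p l * (- \<zeta> * (H (x 0))\<^sup>2 + 2 * p l * (H (x 0))\<^sup>2) * T l (x 0) * g l (fib l x) c d"
proof -
  have "pd 0 (\<Gamma> 0 (off s l + c) (off s l + d)) x = pd 0 (\<lambda>y. p l * H (y 0) * T l (y 0) * g l (fib l y) c d) x"
    by (rule W_cong[OF x]) (use l n_pos in \<open>auto simp: C0ab\<close>)
  also have "\<dots> = (p l * (- \<zeta> * (H (x 0))\<^sup>2 * T l (x 0) + H (x 0) * (2 * p l * H (x 0) * T l (x 0)))) * g l (fib l x) c d"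
    by (rule pdI, rule DERIV_sep_0[where A="\<lambda>t. p l * H t * T l t" and B="\<lambda>z. g l z c d" and s=s and l=l and x=x])
       (use W_pos[OF x] in \<open>auto intro!: derivative_eq_intros DERIV_H DERIV_T simp: algebra_simps\<close>)
  also have "\<dots> = p l * (- \<zeta> * (H (x 0))\<^sup>2 + 2 * p l * (H (x 0))\<^sup>2) * T l (x 0) * g l (fib l x) c d"
    by (simp add: algebra_simps power2_eq_square)
  finally show ?thesis .
qed

lemma P5: "x \<in> W \<Longrightarrow> l < m \<Longrightarrow> c < s l \<Longrightarrow> l2 < m \<Longrightarrow> d < s l2 \<Longrightarrow> l' < m \<Longrightarrow> e < s l' \<Longrightarrow>
     pd (off s l' + e) (\<Gamma> (off s l + c) 0 (off s l2 + d)) x = 0"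
  "x \<in> W \<Longrightarrow> l < m \<Longrightarrow> c < s l \<Longrightarrow> l2 < m \<Longrightarrow> d < s l2 \<Longrightarrow> l' < m \<Longrightarrow> e < s l' \<Longrightarrow>
     pd (off s l' + e) (\<Gamma> (off s l + c) (off s l2 + d) 0) x = 0"
proof -
  assume x: "x \<in> W" and *: "l < m" "c < s l" "l2 < m" "d < s l2" "l' < m" "e < s l'"
  have "pd (off s l' + e) (\<Gamma> (off s l + c) 0 (off s l2 + d)) x
     = pd (off s l' + e) (\<lambda>y. (\<lambda>t. if l = l2 \<and> c = d then p l * H t else 0) (y 0)) x"
    by (rule W_cong[OF x]) (use * in \<open>auto simp: CA0b off_lt_dim\<close>)
  then show "pd (off s l' + e) (\<Gamma> (off s l + c) 0 (off s l2 + d)) x = 0"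
    using pd_time_off[of s l' e "\<lambda>t. if l = l2 \<and> c = d then p l * H t else 0" x] by simp
next
  assume x: "x \<in> W" and *: "l < m" "c < s l" "l2 < m" "d < s l2" "l' < m" "e < s l'"
  have "pd (off s l' + e) (\<Gamma> (off s l + c) (off s l2 + d) 0) x
     = pd (off s l' + e) (\<lambda>y. (\<lambda>t. if l = l2 \<and> c = d then p l * H t else 0) (y 0)) x"
    by (rule W_cong[OF x]) (use * in \<open>auto simp: CAb0 off_lt_dim\<close>)
  then show "pd (off s l' + e) (\<Gamma> (off s l + c) (off s l2 + d) 0) x = 0"
    using pd_time_off[of s l' e "\<lambda>t. if l = l2 \<and> c = d then p l * H t else 0" x] by simp
qed

lemma P6:
  assumes x: "x \<in> W" and l: "l < m" "c < s l"
  shows "pd 0 (\<Gamma> (off s l + c) 0 (off s l + c)) x = - p l * \<zeta> * (H (x 0))\<^sup>2"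
proof -
  have "pd 0 (\<Gamma> (off s l + c) 0 (off s l + c)) x = pd 0 (\<lambda>y. (\<lambda>t. p l * H t) (y 0)) x"
    by (rule W_cong[OF x]) (use l n_pos in \<open>auto simp: CA0b\<close>)
  also have "\<dots> = p l * (- \<zeta> * (H (x 0))\<^sup>2)"
    by (rule pd_time_0) (use W_pos[OF x] in \<open>auto intro!: derivative_eq_intros DERIV_H\<close>)
  finally show ?thesis by simp
qed

lemma P7_ne:
  assumes x: "x \<in> W" "k < n" and l: "l < m" "c < s l" "l1 < m" "d1 < s l1" "l2 < m" "d2 < s l2"
    and ne: "\<not> (l1 = l \<and> l2 = l)"
  shows "pd k (\<Gamma> (off s l + c) (off s l1 + d1) (off s l2 + d2)) x = 0"
  by (rule W_cong0[OF x]) (use l ne in \<open>auto simp: CAbc\<close>)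

lemma P7_eq_fun:
  assumes x: "x \<in> W" "k < n" and l: "l < m" "c < s l" "d1 < s l" "d2 < s l"
  shows "pd k (\<Gamma> (off s l + c) (off s l + d1) (off s l + d2)) x = pd k (\<lambda>y. \<Gamma>F l c d1 d2 (fib l y)) x"
  by (rule W_cong[OF x]) (use l in \<open>auto simp: CAbc\<close>)

lemma P7_0:
  assumes x: "x \<in> W" and l: "l < m" "c < s l" "d1 < s l" "d2 < s l"
  shows "pd 0 (\<Gamma> (off s l + c) (off s l + d1) (off s l + d2)) x = 0"
  using P7_eq_fun[OF x n_pos l] by (simp add: pd_fib_0)

lemma P7_same:
  assumes x: "x \<in> W" and l: "l < m" "c < s l" "d1 < s l" "d2 < s l" "e < s l"
  shows "pd (off s l + e) (\<Gamma> (off s l + c) (off s l + d1) (off s l + d2)) x = pd e (\<Gamma>F l c d1 d2) (fib l x)"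
  using P7_eq_fun[OF x off_lt_dim[of l m e s, OF l(1,5)] l(1-4)] by (simp add: pd_fib_same l)

lemma P7_other:
  assumes x: "x \<in> W" and l: "l < m" "c < s l" "d1 < s l" "d2 < s l" "l' < m" "e < s l'" "l \<noteq> l'"
  shows "pd (off s l' + e) (\<Gamma> (off s l + c) (off s l + d1) (off s l + d2)) x = 0"
  using P7_eq_fun[OF x off_lt_dim[of l' m e s, OF l(5,6)] l(1-4)] pd_fib_other[where s=s and l=l and l'=l' and c=e and m=m and B="\<Gamma>F l c d1 d2" and x=x, OF l(1,5,7,6)] by simp

end

lemma sum_block_point:
  fixes s :: "nat \<Rightarrow> nat"
  assumes "l < (m::nat)" "c < s l" "\<And>l' d. l' < m \<Longrightarrow> d < s l' \<Longrightarrow> \<not> (l' = l \<and> d = c) \<Longrightarrow> F l' d = 0"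
  shows "(\<Sum>l'<m. \<Sum>d<s l'. F l' d) = F l c"
proof -
  have "(\<Sum>l'<m. \<Sum>d<s l'. F l' d) = (\<Sum>d<s l. F l d)"
    by (rule sum_single_block) (use assms in auto)
  also have "\<dots> = F l c"
  proof -
    have "(\<Sum>d<s l. F l d) = F l c + (\<Sum>d\<in>{..<s l} - {c}. F l d)"
      by (rule sum.remove) (use assms in auto)
    also have "(\<Sum>d\<in>{..<s l} - {c}. F l d) = 0" by (rule sum.neutral) (use assms in auto)
    finally show ?thesis by simp
  qed
  finally show ?thesis .
qed

context wp
begin

lemma CL00: "x \<in> W \<Longrightarrow> L < n \<Longrightarrow> \<Gamma> L 0 0 x = 0"
  by (auto elim: idx_cases simp: C000 CA00)

lemma C00L: "x \<in> W \<Longrightarrow> L < n \<Longrightarrow> \<Gamma> 0 0 L x = 0"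
  by (auto elim: idx_cases simp: C000 C00b)

lemma C0L0: "x \<in> W \<Longrightarrow> L < n \<Longrightarrow> \<Gamma> 0 L 0 x = 0"
  by (auto elim: idx_cases simp: C000 C0a0)

lemma sum_sp: "(\<Sum>l<m. \<Sum>c<s l. K) = real_of_nat (\<Sum>l<m. s l) * K" for K :: real
  by (simp add: sum_distrib_right)

lemma zeta_sum: "(\<Sum>l<m. \<Sum>c<s l. p l * K) = \<zeta> * K"
  by (simp add: zeta sum_distrib_right sum_distrib_left mult_ac)

lemma eta_sum: "(\<Sum>l<m. \<Sum>c<s l. (p l)\<^sup>2 * K) = \<zeta>\<^sup>2 * K"
  by (simp add: eta[symmetric] sum_distrib_right sum_distrib_left mult_ac)

lemma ricci00: assumes x: "x \<in> W" shows "ricci n G x 0 0 = 0"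
proof -
  let ?h = "H (x 0)"
  have A: "(\<Sum>k<n. pd k (\<Gamma> k 0 0) x - pd 0 (\<Gamma> k 0 k) x) = (\<Sum>l<m. \<Sum>c<s l. p l * (\<zeta> * ?h\<^sup>2))"
    using x n_pos by (simp add: sum_split P1 P6 off_lt_dim mult.assoc)
  have B1: "(\<Sum>L<n. \<Gamma> (off s l + c) 0 L x * \<Gamma> L 0 (off s l + c) x) = (p l)\<^sup>2 * ?h\<^sup>2"
    if l: "l < m" "c < s l" for l c
  proof -
    have "(\<Sum>L<n. \<Gamma> (off s l + c) 0 L x * \<Gamma> L 0 (off s l + c) x) =
        (\<Sum>l'<m. \<Sum>d<s l'. \<Gamma> (off s l + c) 0 (off s l' + d) x * \<Gamma> (off s l' + d) 0 (off s l + c) x)"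
      using x l by (simp add: sum_split CA00)
    also have "\<dots> = \<Gamma> (off s l + c) 0 (off s l + c) x * \<Gamma> (off s l + c) 0 (off s l + c) x"
      by (rule sum_block_point[where s=s and m=m, OF l]) (use x l in \<open>auto simp: CA0b\<close>)
    also have "\<dots> = (p l)\<^sup>2 * ?h\<^sup>2" using x l by (simp add: CA0b power2_eq_square)
    finally show ?thesis .
  qed
  have B: "(\<Sum>k<n. \<Sum>L<n. \<Gamma> k k L x * \<Gamma> L 0 0 x - \<Gamma> k 0 L x * \<Gamma> L 0 k x) =
      - (\<Sum>l<m. \<Sum>c<s l. (p l)\<^sup>2 * ?h\<^sup>2)"
  proof -
    have "(\<Sum>k<n. \<Sum>L<n. \<Gamma> k k L x * \<Gamma> L 0 0 x - \<Gamma> k 0 L x * \<Gamma> L 0 k x) =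
        - (\<Sum>k<n. \<Sum>L<n. \<Gamma> k 0 L x * \<Gamma> L 0 k x)"
      using x by (simp add: CL00 sum_negf)
    also have "(\<Sum>k<n. \<Sum>L<n. \<Gamma> k 0 L x * \<Gamma> L 0 k x) = (\<Sum>l<m. \<Sum>c<s l. \<Sum>L<n. \<Gamma> (off s l + c) 0 L x * \<Gamma> L 0 (off s l + c) x)"
      using x by (subst sum_split) (simp add: C00L)
    also have "\<dots> = (\<Sum>l<m. \<Sum>c<s l. (p l)\<^sup>2 * ?h\<^sup>2)"
      by (intro sum.cong refl) (simp add: B1)
    finally show ?thesis .
  qed
  show ?thesis unfolding ricci_def A B zeta_sum eta_sum using eta by (simp add: power2_eq_square)
qed

end

context wp
begin

lemma GF_sym:
  assumes l: "l < m" and z: "z \<in> U l"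
  shows "\<Gamma>F l c i j z = \<Gamma>F l c j i z"
proof -
  have op: "openin (top_of_set (coord_space (s l))) (U l)"
    using fib_semi[OF l] by (simp add: semi_riem_metric_def)
  have "pd L (\<lambda>y. g l y i j) z = pd L (\<lambda>y. g l y j i) z" if "L < s l" for L
    by (rule pd_cong[OF op z that]) (rule fib_sym[OF l])
  then show ?thesis unfolding christoffel_def
    by (intro arg_cong[where f="\<lambda>u. 1/2 * u"] sum.cong refl) auto
qed

lemma R0: "x \<in> W \<Longrightarrow> (\<Sum>L<n. F L * \<Gamma> L 0 0 x) = 0"
  by (simp add: CL00)

lemma R1:
  assumes x: "x \<in> W" and l: "l < m" "d < s l"
  shows "(\<Sum>L<n. F L * \<Gamma> L 0 (off s l + d) x) = F (off s l + d) * (p l * H (x 0))"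
proof -
  have "(\<Sum>L<n. F L * \<Gamma> L 0 (off s l + d) x) = (\<Sum>l'<m. \<Sum>e<s l'. F (off s l' + e) * \<Gamma> (off s l' + e) 0 (off s l + d) x)"
    using x l by (simp add: sum_split C00b)
  also have "\<dots> = F (off s l + d) * \<Gamma> (off s l + d) 0 (off s l + d) x"
    by (rule sum_block_point[where s=s and m=m, OF l]) (use x l in \<open>auto simp: CA0b\<close>)
  finally show ?thesis using x l by (simp add: CA0b)
qed

lemma R2:
  assumes x: "x \<in> W" and l: "l < m" "d < s l"
  shows "(\<Sum>L<n. F L * \<Gamma> L (off s l + d) 0 x) = F (off s l + d) * (p l * H (x 0))"
proof -
  have "(\<Sum>L<n. F L * \<Gamma> L (off s l + d) 0 x) = (\<Sum>l'<m. \<Sum>e<s l'. F (off s l' + e) * \<Gamma> (off s l' + e) (off s l + d) 0 x)"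
    using x l by (simp add: sum_split C0a0)
  also have "\<dots> = F (off s l + d) * \<Gamma> (off s l + d) (off s l + d) 0 x"
    by (rule sum_block_point[where s=s and m=m, OF l]) (use x l in \<open>auto simp: CAb0\<close>)
  finally show ?thesis using x l by (simp add: CAb0)
qed

lemma R3:
  assumes x: "x \<in> W" and l: "l < m" "d < s l"
  shows "(\<Sum>L<n. \<Gamma> (off s l + d) 0 L x * F L) = (p l * H (x 0)) * F (off s l + d)"
proof -
  have "(\<Sum>L<n. \<Gamma> (off s l + d) 0 L x * F L) = (\<Sum>l'<m. \<Sum>e<s l'. \<Gamma> (off s l + d) 0 (off s l' + e) x * F (off s l' + e))"
    using x l by (simp add: sum_split CA00)
  also have "\<dots> = \<Gamma> (off s l + d) 0 (off s l + d) x * F (off s l + d)"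
    by (rule sum_block_point[where s=s and m=m, OF l]) (use x l in \<open>auto simp: CA0b\<close>)
  finally show ?thesis using x l by (simp add: CA0b)
qed

lemma T1:
  assumes x: "x \<in> W" and l: "l < m" "d < s l"
  shows "(\<Sum>k<n. \<Gamma> k k (off s l + d) x) = (\<Sum>e<s l. \<Gamma>F l e e d (fib l x))"
proof -
  have "(\<Sum>k<n. \<Gamma> k k (off s l + d) x) = (\<Sum>l'<m. \<Sum>e<s l'. \<Gamma> (off s l' + e) (off s l' + e) (off s l + d) x)"
    using x l by (simp add: sum_split C00b)
  also have "\<dots> = (\<Sum>e<s l. \<Gamma> (off s l + e) (off s l + e) (off s l + d) x)"
    by (rule sum_single_block[OF l(1)]) (use x l in \<open>auto simp: CAbc\<close>)
  also have "\<dots> = (\<Sum>e<s l. \<Gamma>F l e e d (fib l x))"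
    using x l by (intro sum.cong refl) (auto simp: CAbc)
  finally show ?thesis .
qed

lemma T0:
  assumes x: "x \<in> W"
  shows "(\<Sum>k<n. \<Gamma> k k 0 x) = \<zeta> * H (x 0)"
proof -
  have "(\<Sum>k<n. \<Gamma> k k 0 x) = (\<Sum>l'<m. \<Sum>e<s l'. \<Gamma> (off s l' + e) (off s l' + e) 0 x)"
    using x by (simp add: sum_split C000)
  also have "\<dots> = (\<Sum>l'<m. \<Sum>e<s l'. p l' * H (x 0))"
    using x by (intro sum.cong refl) (auto simp: CAb0)
  also have "\<dots> = \<zeta> * H (x 0)" by (rule zeta_sum)
  finally show ?thesis .
qed

lemma P7_0all:
  assumes x: "x \<in> W" and l: "l < m" "c < s l" "l1 < m" "d1 < s l1" "l2 < m" "d2 < s l2"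
  shows "pd 0 (\<Gamma> (off s l + c) (off s l1 + d1) (off s l2 + d2)) x = 0"
proof (cases "l1 = l \<and> l2 = l")
  case True then show ?thesis using P7_0[OF x] l by auto
next
  case False then show ?thesis using P7_ne[OF x n_pos l] by auto
qed

lemma P7_J:
  assumes x: "x \<in> W" and l: "l < m" "c < s l" "l2 < m" "e < s l2" "l' < m" "d < s l'" "l' \<noteq> l"
  shows "pd (off s l' + d) (\<Gamma> (off s l2 + e) (off s l + c) (off s l2 + e)) x = 0"
proof (cases "l2 = l")
  case True then show ?thesis using P7_other[OF x, of l e c e l' d] l by auto
next
  case False then show ?thesis using P7_ne[OF x off_lt_dim[of l' m d s] l(3,4,1,2,3,4)] l by auto
qed

lemma ricci0b:
  assumes x: "x \<in> W" and l: "l < m" "d < s l"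
  shows "ricci n G x 0 (off s l + d) = 0"
proof -
  let ?J = "off s l + d" and ?h = "H (x 0)"
  have A: "(\<Sum>k<n. pd k (\<Gamma> k 0 ?J) x - pd ?J (\<Gamma> k 0 k) x) = 0"
    using x l n_pos by (simp add: sum_split P1 P2 P5 off_lt_dim)
  have B1: "(\<Sum>k<n. \<Sum>L<n. \<Gamma> k k L x * \<Gamma> L 0 ?J x) = (\<Sum>e<s l. \<Gamma>F l e e d (fib l x)) * (p l * ?h)"
    using x l by (simp add: R1 T1 sum_distrib_right[symmetric])
  have B2: "(\<Sum>k<n. \<Sum>L<n. \<Gamma> k ?J L x * \<Gamma> L 0 k x) = (\<Sum>e<s l. \<Gamma>F l e d e (fib l x)) * (p l * ?h)"
  proof -
    have "(\<Sum>k<n. \<Sum>L<n. \<Gamma> k ?J L x * \<Gamma> L 0 k x) = (\<Sum>l'<m. \<Sum>e<s l'. \<Gamma> (off s l' + e) ?J (off s l' + e) x * (p l' * ?h))"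
      using x by (subst sum_split) (simp add: R0 R1)
    also have "\<dots> = (\<Sum>e<s l. \<Gamma> (off s l + e) ?J (off s l + e) x * (p l * ?h))"
      by (rule sum_single_block[OF l(1)]) (use x l in \<open>auto simp: CAbc\<close>)
    also have "\<dots> = (\<Sum>e<s l. \<Gamma>F l e d e (fib l x)) * (p l * ?h)"
      using x l by (simp add: CAbc sum_distrib_right)
    finally show ?thesis .
  qed
  have "(\<Sum>e<s l. \<Gamma>F l e e d (fib l x)) = (\<Sum>e<s l. \<Gamma>F l e d e (fib l x))"
    using GF_sym[OF l(1) W_fib[OF x l(1)]] by simp
  then show ?thesis unfolding ricci_def A by (simp add: sum_subtractf B1 B2)
qed

lemma riccia0:
  assumes x: "x \<in> W" and l: "l < m" "c < s l"
  shows "ricci n G x (off s l + c) 0 = 0"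
proof -
  let ?I = "off s l + c" and ?h = "H (x 0)"
  have A: "(\<Sum>k<n. pd k (\<Gamma> k ?I 0) x - pd 0 (\<Gamma> k ?I k) x) = 0"
    using x l n_pos by (simp add: sum_split P2 P5 P7_0all off_lt_dim)
  have B1: "(\<Sum>k<n. \<Sum>L<n. \<Gamma> k k L x * \<Gamma> L ?I 0 x) = (\<Sum>e<s l. \<Gamma>F l e e c (fib l x)) * (p l * ?h)"
    using x l by (simp add: R2 T1 sum_distrib_right[symmetric])
  have B2: "(\<Sum>k<n. \<Sum>L<n. \<Gamma> k 0 L x * \<Gamma> L ?I k x) = (\<Sum>e<s l. \<Gamma>F l e c e (fib l x)) * (p l * ?h)"
  proof -
    have "(\<Sum>k<n. \<Sum>L<n. \<Gamma> k 0 L x * \<Gamma> L ?I k x) = (\<Sum>l'<m. \<Sum>e<s l'. (p l' * ?h) * \<Gamma> (off s l' + e) ?I (off s l' + e) x)"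
      using x by (subst sum_split) (simp add: C00L R3)
    also have "\<dots> = (\<Sum>e<s l. (p l * ?h) * \<Gamma> (off s l + e) ?I (off s l + e) x)"
      by (rule sum_single_block[OF l(1)]) (use x l in \<open>auto simp: CAbc\<close>)
    also have "\<dots> = (p l * ?h) * (\<Sum>e<s l. \<Gamma>F l e c e (fib l x))"
      using x l by (simp add: CAbc sum_distrib_left)
    also have "\<dots> = (\<Sum>e<s l. \<Gamma>F l e c e (fib l x)) * (p l * ?h)" by (rule mult.commute)
    finally show ?thesis .
  qed
  have "(\<Sum>e<s l. \<Gamma>F l e e c (fib l x)) = (\<Sum>e<s l. \<Gamma>F l e c e (fib l x))"
    using GF_sym[OF l(1) W_fib[OF x l(1)]] by simp
  then show ?thesis unfolding ricci_def A by (simp add: sum_subtractf B1 B2)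
qed

end

context wp
begin

lemma ricci_ne:
  assumes x: "x \<in> W" and l: "l < m" "c < s l" "l' < m" "d < s l'" "l \<noteq> l'"
  shows "ricci n G x (off s l + c) (off s l' + d) = 0"
proof -
  let ?I = "off s l + c" and ?J = "off s l' + d"
  have A: "(\<Sum>k<n. pd k (\<Gamma> k ?I ?J) x - pd ?J (\<Gamma> k ?I k) x) = 0"
    using x l n_pos by (simp add: sum_split P3 P2 P7_ne P7_J off_lt_dim)
  have Z1: "\<Gamma> L ?I ?J x = 0" if "L < n" for L
    using that x l by (cases rule: idx_cases) (auto simp: C0ab CAbc)
  have Z2: "\<Gamma> k ?J L x * \<Gamma> L ?I k x = 0" if "k < n" "L < n" for k L
    using that(1)
  proof (cases rule: idx_cases)
    case 1
    show ?thesis using that(2) by (cases rule: idx_cases) (use 1 x l in \<open>auto simp: C0a0 C0ab CAb0\<close>)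
  next
    case (2 l3 f)
    show ?thesis using that(2) by (cases rule: idx_cases) (use 2 x l in \<open>auto simp: C0a0 C0ab CAb0 CAbc\<close>)
  qed
  have B: "(\<Sum>k<n. \<Sum>L<n. \<Gamma> k k L x * \<Gamma> L ?I ?J x - \<Gamma> k ?J L x * \<Gamma> L ?I k x) = 0"
  proof (intro sum.neutral ballI)
    fix k L assume "k \<in> {..<n}" "L \<in> {..<n}"
    then have "k < n" "L < n" by auto
    then show "\<Gamma> k k L x * \<Gamma> L ?I ?J x - \<Gamma> k ?J L x * \<Gamma> L ?I k x = 0"
      using Z1[of L] Z2[of k L] by simp
  qed
  show ?thesis unfolding ricci_def A B by simp
qed

lemma fib_ricci0:
  assumes l: "l < m" "z \<in> U l" "c < s l" "d < s l"
  shows "(\<Sum>k<s l. pd k (\<Gamma>F l k c d) z - pd d (\<Gamma>F l k c k) z) +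
    ((\<Sum>k<s l. \<Sum>l'<s l. \<Gamma>F l k k l' z * \<Gamma>F l l' c d z) - (\<Sum>k<s l. \<Sum>l'<s l. \<Gamma>F l k d l' z * \<Gamma>F l l' c k z)) = 0"
  using fibres l unfolding ricci_flat_on_def ricci_def by (simp add: sum_subtractf)

lemma ricci_same:
  assumes x: "x \<in> W" and l: "l < m" "c < s l" "d < s l"
  shows "ricci n G x (off s l + c) (off s l + d) = 0"
proof -
  let ?I = "off s l + c" and ?J = "off s l + d" and ?h = "H (x 0)" and ?z = "fib l x"
  let ?T = "T l (x 0)" and ?g = "g l (fib l x) c d"
  have z: "?z \<in> U l" using W_fib[OF x l(1)] .
  have gs: "g l (fib l x) d c = ?g" using fib_sym[OF l(1) z] by simp
  have A: "(\<Sum>k<n. pd k (\<Gamma> k ?I ?J) x - pd ?J (\<Gamma> k ?I k) x) =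
     p l * (- \<zeta> * ?h\<^sup>2 + 2 * p l * ?h\<^sup>2) * ?T * ?g + (\<Sum>e<s l. pd e (\<Gamma>F l e c d) ?z - pd d (\<Gamma>F l e c e) ?z)"
  proof -
    have "(\<Sum>k<n. pd k (\<Gamma> k ?I ?J) x - pd ?J (\<Gamma> k ?I k) x) =
       p l * (- \<zeta> * ?h\<^sup>2 + 2 * p l * ?h\<^sup>2) * ?T * ?g +
       (\<Sum>l2<m. \<Sum>e<s l2. pd (off s l2 + e) (\<Gamma> (off s l2 + e) ?I ?J) x - pd ?J (\<Gamma> (off s l2 + e) ?I (off s l2 + e)) x)"
      using x l by (simp add: sum_split P4 P2 off_lt_dim)
    also have "(\<Sum>l2<m. \<Sum>e<s l2. pd (off s l2 + e) (\<Gamma> (off s l2 + e) ?I ?J) x - pd ?J (\<Gamma> (off s l2 + e) ?I (off s l2 + e)) x)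
       = (\<Sum>e<s l. pd (off s l + e) (\<Gamma> (off s l + e) ?I ?J) x - pd ?J (\<Gamma> (off s l + e) ?I (off s l + e)) x)"
      by (rule sum_single_block[OF l(1)]) (use x l in \<open>auto simp: P7_ne off_lt_dim\<close>)
    also have "\<dots> = (\<Sum>e<s l. pd e (\<Gamma>F l e c d) ?z - pd d (\<Gamma>F l e c e) ?z)"
      using x l by (intro sum.cong refl) (auto simp: P7_same)
    finally show ?thesis .
  qed
  have B1: "(\<Sum>k<n. \<Sum>L<n. \<Gamma> k k L x * \<Gamma> L ?I ?J x) =
     \<zeta> * ?h * (p l * ?h * ?T * ?g) + (\<Sum>k<s l. \<Sum>l'<s l. \<Gamma>F l k k l' ?z * \<Gamma>F l l' c d ?z)"
  proof -
    have "(\<Sum>k<n. \<Sum>L<n. \<Gamma> k k L x * \<Gamma> L ?I ?J x) = (\<Sum>L<n. (\<Sum>k<n. \<Gamma> k k L x) * \<Gamma> L ?I ?J x)"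
      by (subst sum.swap) (simp add: sum_distrib_right)
    also have "\<dots> = \<zeta> * ?h * (p l * ?h * ?T * ?g) +
       (\<Sum>l2<m. \<Sum>e<s l2. (\<Sum>k<n. \<Gamma> k k (off s l2 + e) x) * \<Gamma> (off s l2 + e) ?I ?J x)"
      using x l by (subst sum_split) (simp add: T0 C0ab)
    also have "(\<Sum>l2<m. \<Sum>e<s l2. (\<Sum>k<n. \<Gamma> k k (off s l2 + e) x) * \<Gamma> (off s l2 + e) ?I ?J x) =
       (\<Sum>e<s l. (\<Sum>k<n. \<Gamma> k k (off s l + e) x) * \<Gamma> (off s l + e) ?I ?J x)"
      by (rule sum_single_block[OF l(1)]) (use x l in \<open>auto simp: CAbc\<close>)
    also have "\<dots> = (\<Sum>e<s l. (\<Sum>k<s l. \<Gamma>F l k k e ?z) * \<Gamma>F l e c d ?z)"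
      using x l by (intro sum.cong refl) (auto simp: T1 CAbc)
    also have "\<dots> = (\<Sum>k<s l. \<Sum>l'<s l. \<Gamma>F l k k l' ?z * \<Gamma>F l l' c d ?z)"
      by (subst sum.swap) (simp add: sum_distrib_right)
    finally show ?thesis .
  qed
  have B2k: "(\<Sum>L<n. \<Gamma> (off s l3 + f) ?J L x * \<Gamma> L ?I (off s l3 + f) x) =
       \<Gamma> (off s l3 + f) ?J 0 x * \<Gamma> 0 ?I (off s l3 + f) x +
       (\<Sum>l2<m. \<Sum>e<s l2. \<Gamma> (off s l3 + f) ?J (off s l2 + e) x * \<Gamma> (off s l2 + e) ?I (off s l3 + f) x)"
    for l3 f by (rule sum_split)
  have B2: "(\<Sum>k<n. \<Sum>L<n. \<Gamma> k ?J L x * \<Gamma> L ?I k x) =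
     (p l * ?h * ?T * ?g) * (p l * ?h) + (p l * ?h) * (p l * ?h * ?T * ?g) +
     (\<Sum>k<s l. \<Sum>l'<s l. \<Gamma>F l k d l' ?z * \<Gamma>F l l' c k ?z)"
  proof -
    have "(\<Sum>k<n. \<Sum>L<n. \<Gamma> k ?J L x * \<Gamma> L ?I k x) =
       (\<Sum>L<n. \<Gamma> 0 ?J L x * \<Gamma> L ?I 0 x) +
       (\<Sum>l3<m. \<Sum>f<s l3. \<Gamma> (off s l3 + f) ?J 0 x * \<Gamma> 0 ?I (off s l3 + f) x) +
       (\<Sum>l3<m. \<Sum>f<s l3. \<Sum>l2<m. \<Sum>e<s l2. \<Gamma> (off s l3 + f) ?J (off s l2 + e) x * \<Gamma> (off s l2 + e) ?I (off s l3 + f) x)"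
      by (subst sum_split) (simp add: B2k sum.distrib add.assoc)
    also have "(\<Sum>L<n. \<Gamma> 0 ?J L x * \<Gamma> L ?I 0 x) = (p l * ?h * ?T * ?g) * (p l * ?h)"
      using x l by (simp add: R2 C0ab gs)
    also have "(\<Sum>l3<m. \<Sum>f<s l3. \<Gamma> (off s l3 + f) ?J 0 x * \<Gamma> 0 ?I (off s l3 + f) x) =
        \<Gamma> ?J ?J 0 x * \<Gamma> 0 ?I ?J x"
      by (rule sum_block_point[where s=s and m=m, OF l(1,3)]) (use x l in \<open>auto simp: CAb0\<close>)
    also have "\<dots> = (p l * ?h) * (p l * ?h * ?T * ?g)"
      using x l by (simp add: CAb0 C0ab)
    also have "(\<Sum>l3<m. \<Sum>f<s l3. \<Sum>l2<m. \<Sum>e<s l2. \<Gamma> (off s l3 + f) ?J (off s l2 + e) x * \<Gamma> (off s l2 + e) ?I (off s l3 + f) x) =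
       (\<Sum>f<s l. \<Sum>l2<m. \<Sum>e<s l2. \<Gamma> (off s l + f) ?J (off s l2 + e) x * \<Gamma> (off s l2 + e) ?I (off s l + f) x)"
      by (rule sum_single_block[OF l(1)]) (use x l in \<open>auto simp: CAbc intro!: sum.neutral\<close>)
    also have "\<dots> = (\<Sum>f<s l. \<Sum>e<s l. \<Gamma> (off s l + f) ?J (off s l + e) x * \<Gamma> (off s l + e) ?I (off s l + f) x)"
    proof (rule sum.cong[OF refl])
      fix f assume f: "f \<in> {..<s l}"
      show "(\<Sum>l2<m. \<Sum>e<s l2. \<Gamma> (off s l + f) ?J (off s l2 + e) x * \<Gamma> (off s l2 + e) ?I (off s l + f) x) =
         (\<Sum>e<s l. \<Gamma> (off s l + f) ?J (off s l + e) x * \<Gamma> (off s l + e) ?I (off s l + f) x)"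
        by (rule sum_single_block[OF l(1)]) (use x l f in \<open>auto simp: CAbc\<close>)
    qed
    also have "\<dots> = (\<Sum>k<s l. \<Sum>l'<s l. \<Gamma>F l k d l' ?z * \<Gamma>F l l' c k ?z)"
      using x l by (intro sum.cong refl) (auto simp: CAbc)
    finally show ?thesis .
  qed
  note F0 = fib_ricci0[OF l(1) z l(2,3)]
  have S: "(\<Sum>k<n. \<Sum>L<n. \<Gamma> k k L x * \<Gamma> L ?I ?J x - \<Gamma> k ?J L x * \<Gamma> L ?I k x) =
     (\<zeta> * ?h * (p l * ?h * ?T * ?g) + (\<Sum>k<s l. \<Sum>l'<s l. \<Gamma>F l k k l' ?z * \<Gamma>F l l' c d ?z)) -
     ((p l * ?h * ?T * ?g) * (p l * ?h) + (p l * ?h) * (p l * ?h * ?T * ?g) +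
     (\<Sum>k<s l. \<Sum>l'<s l. \<Gamma>F l k d l' ?z * \<Gamma>F l l' c k ?z))"
    by (simp only: sum_subtractf B1 B2)
  show ?thesis unfolding ricci_def A S
    using F0 by (simp add: algebra_simps power2_eq_square)
qed

end

lemma ipd_cong:
  assumes W: "openin (top_of_set (coord_space n)) W" and eq: "\<And>y. y \<in> W \<Longrightarrow> f y = f' y"
  shows "set ks \<subseteq> {..<n} \<Longrightarrow> y \<in> W \<Longrightarrow> ipd ks f y = ipd ks f' y"
proof (induction ks arbitrary: y)
  case Nil then show ?case using eq by simp
next
  case (Cons k ks)
  then show ?case by (simp, intro pd_cong[OF W]) auto
qed

lemma line_DERIV_cong_ev:
  assumes W: "openin (top_of_set (coord_space n)) W" "x \<in> W" "k < n"
    and eq: "\<And>y. y \<in> W \<Longrightarrow> f y = f' y"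
    and D: "DERIV (\<lambda>h. f' (x(k := x k + h))) 0 :> D'"
  shows "(\<lambda>h. f (x(k := x k + h))) differentiable (at 0)"
proof -
  have "DERIV (\<lambda>h. f (x(k := x k + h))) 0 :> D' \<longleftrightarrow> DERIV (\<lambda>h. f' (x(k := x k + h))) 0 :> D'"
    by (rule line_DERIV_cong) (use W eq in auto)
  then have "DERIV (\<lambda>h. f (x(k := x k + h))) 0 :> D'" using D by simp
  then show ?thesis by (auto simp: real_differentiable_def)
qed

lemma smooth_cong:
  assumes W: "openin (top_of_set (coord_space n)) W" and eq: "\<And>y. y \<in> W \<Longrightarrow> f y = f' y"
    and sm: "smooth_on n W f'"
  shows "smooth_on n W f"
  unfolding smooth_on_def
proof (intro allI impI conjI ballI)
  fix ks assume ks: "set ks \<subseteq> {..<n}"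
  have e: "\<And>y. y \<in> W \<Longrightarrow> ipd ks f y = ipd ks f' y" using ipd_cong[OF W eq ks] .
  show "continuous_on W (ipd ks f)"
    using sm ks e unfolding smooth_on_def by (metis continuous_on_cong)
  fix x k assume x: "x \<in> W" and k: "k < n"
  have "(\<lambda>h. ipd ks f' (x(k := x k + h))) differentiable (at 0)"
    using sm ks x k unfolding smooth_on_def by blast
  then obtain D' where Df: "DERIV (\<lambda>h. ipd ks f' (x(k := x k + h))) 0 :> D'"
    by (auto simp: real_differentiable_def)
  show "(\<lambda>h. ipd ks f (x(k := x k + h))) differentiable (at 0)"
    by (rule line_DERIV_cong_ev[OF W x k e Df])
qed

lemma ipd_const: "ipd ks (\<lambda>y. c) = (if ks = [] then (\<lambda>y. c) else (\<lambda>y. 0))"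
  by (induction ks) auto

lemma smooth_const: "smooth_on n W (\<lambda>y. c)"
  unfolding smooth_on_def by (simp add: ipd_const)

context wp
begin

lemma smooth_prod:
  assumes l: "l < m" and D: "\<And>z t. t > 0 \<Longrightarrow> DERIV (D z) t :> D (Suc z) t"
    and B: "smooth_on (s l) (U l) B"
  shows "smooth_on n W (\<lambda>y. D 0 (y 0) * B (fib l y))"
proof -
  define good where "good ks = (\<forall>k\<in>set ks. k = 0 \<or> (off s l \<le> k \<and> k < off s l + s l))" for ks
  define zc where "zc ks = length (filter (\<lambda>k. k = 0) ks)" for ks :: "nat list"
  define kp where "kp ks = map (\<lambda>k. k - off s l) (filter (\<lambda>k. k \<noteq> 0) ks)" for ks
  define R where "R ks y = (if good ks then D (zc ks) (y 0) * ipd (kp ks) B (fib l y) else 0)" for ks y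
  have kp_sub: "set (kp ks) \<subseteq> {..<s l}" if "good ks" for ks
    using that unfolding good_def kp_def by auto
  have Bsm: "set ks \<subseteq> {..<s l} \<Longrightarrow> continuous_on (U l) (ipd ks B) \<and>
     (\<forall>z\<in>U l. \<forall>k<s l. (\<lambda>h. ipd ks B (z(k := z k + h))) differentiable (at 0))" for ks
    using B unfolding smooth_on_def by blast
  have key: "DERIV (\<lambda>h. R ks (x(k := x k + h))) 0 :> R (k # ks) x" if x: "x \<in> W" and k: "k < n" for ks x k
  proof (cases "good ks")
    case False
    then have "\<not> good (k # ks)" by (simp add: good_def)
    then show ?thesis using False by (simp add: R_def)
  next
    case True
    let ?C = "ipd (kp ks) B"
    have R_eq: "R ks = (\<lambda>y. D (zc ks) (y 0) * ?C (fib l y))" using True by (simp add: R_def fun_eq_iff)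
    show ?thesis using k
    proof (cases rule: idx_cases)
      case 1
      have "good (k # ks)" "zc (k # ks) = Suc (zc ks)" "kp (k # ks) = kp ks"
        using True 1 by (auto simp: good_def zc_def kp_def)
      then have "R (k # ks) x = D (Suc (zc ks)) (x 0) * ?C (fib l x)" by (simp add: R_def)
      then show ?thesis unfolding R_eq 1
        using DERIV_sep_0[where A="D (zc ks)" and B="?C" and s=s and l=l and x=x, OF D[OF W_pos[OF x]]] by simp
    next
      case (2 l' e)
      show ?thesis
      proof (cases "l' = l")
        case True2: True
        have g2: "good (k # ks)" "zc (k # ks) = zc ks" "kp (k # ks) = e # kp ks"
          using True 2 True2 by (auto simp: good_def zc_def kp_def)
        then have "R (k # ks) x = D (zc ks) (x 0) * pd e ?C (fib l x)" by (simp add: R_def)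
        moreover have "DERIV (\<lambda>h. ?C ((fib l x)(e := fib l x e + h))) 0 :> pd e ?C (fib l x)"
          using Bsm[OF kp_sub[OF True]] W_fib[OF x l] 2 True2 by (intro pd_DERIV) auto
        ultimately show ?thesis unfolding R_eq 2 True2
          using DERIV_sep_same[where A="D (zc ks)" and B="?C" and s=s and l=l and x=x and c=e] 2 True2 by simp
      next
        case False2: False
        have nb: "\<not> (off s l \<le> k \<and> k < off s l + s l)"
          using blk_unique[of l' m e s l] 2 False2 by auto
        have "\<not> good (k # ks)"
        proof
          assume "good (k # ks)"
          then have "k = 0 \<or> (off s l \<le> k \<and> k < off s l + s l)" by (simp add: good_def)
          then show False using nb 2(3) off_ne0[of s l' e] by simp
        qed
        then have "R (k # ks) x = 0" by (simp add: R_def)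
        then show ?thesis unfolding R_eq 2
          using DERIV_sep_other[where A="D (zc ks)" and B="?C" and s=s and l=l and l'=l' and c=e and m=m and x=x] 2 False2 l by simp
      qed
    qed
  qed
  have ipdR: "ipd ks (\<lambda>y. D 0 (y 0) * B (fib l y)) y = R ks y" if "set ks \<subseteq> {..<n}" "y \<in> W" for ks y
    using that
  proof (induction ks arbitrary: y)
    case Nil then show ?case by (simp add: R_def good_def zc_def kp_def)
  next
    case (Cons k ks)
    have "ipd (k # ks) (\<lambda>y. D 0 (y 0) * B (fib l y)) y = pd k (R ks) y"
      using Cons by (simp, intro W_cong) auto
    also have "\<dots> = R (k # ks) y" using key[of y k ks] Cons.prems by (intro pdI) auto
    finally show ?case .
  qed
  have Dcont: "continuous_on {0<..} (D z)" for z
  proof (rule continuous_at_imp_continuous_on, intro ballI)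
    fix t :: real assume "t \<in> {0<..}"
    then have "t > 0" by simp
    then show "isCont (D z) t" by (rule DERIV_isCont[OF D])
  qed
  have Rcont: "continuous_on W (R ks)" for ks
  proof (cases "good ks")
    case False
    then have "R ks = (\<lambda>y. 0)" by (simp add: R_def fun_eq_iff)
    then show ?thesis by (simp only: continuous_on_const)
  next
    case True
    have c0: "continuous_on W (\<lambda>y::nat\<Rightarrow>real. y 0)"
      by (rule continuous_on_subset[OF continuous_on_product_coordinates]) simp
    have c1: "continuous_on W (\<lambda>y. D (zc ks) (y 0))"
      by (rule continuous_on_compose2[OF Dcont c0]) (auto simp: W_pos)
    have c2: "continuous_on W (\<lambda>y. ipd (kp ks) B (fib l y))"
      by (rule continuous_on_compose2[OF conjunct1[OF Bsm[OF kp_sub[OF True]]] fib_cont]) (auto simp: W_fib l)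
    have "R ks = (\<lambda>y. D (zc ks) (y 0) * ipd (kp ks) B (fib l y))" using True by (simp add: R_def fun_eq_iff)
    then show ?thesis using continuous_on_mult[OF c1 c2] by (simp only:)
  qed
  show ?thesis unfolding smooth_on_def
  proof (intro allI impI conjI ballI)
    fix ks assume ks: "set ks \<subseteq> {..<n}"
    show "continuous_on W (ipd ks (\<lambda>y. D 0 (y 0) * B (fib l y)))"
      by (rule continuous_on_eq[OF Rcont[of ks]]) (simp add: ipdR[OF ks])
    fix x k assume x: "x \<in> W" and k: "k < n"
    show "(\<lambda>h. ipd ks (\<lambda>y. D 0 (y 0) * B (fib l y)) (x(k := x k + h))) differentiable (at 0)"
      by (rule line_DERIV_cong_ev[OF W_open x k ipdR[OF ks] key[OF x k]])
  qed
qed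

end

context wp
begin

definition "Dz l z t = (\<Prod>i<z. (2 * p l / \<zeta> - real i)) * a ^ z * (a * t + b) powr (2 * p l / \<zeta> - real z)"

lemma Dz_DERIV: "t > 0 \<Longrightarrow> DERIV (Dz l z) t :> Dz l (Suc z) t"
proof -
  assume t: "t > 0"
  have q: "a * t + b > 0" using pos[OF t] .
  let ?r = "2 * p l / \<zeta>"
  have "DERIV (\<lambda>t. (\<Prod>i<z. (?r - real i)) * a ^ z * (a * t + b) powr (?r - real z)) t :>
      (\<Prod>i<z. (?r - real i)) * a ^ z * ((?r - real z) * (a * t + b) powr (?r - real z - 1) * a)"
    using q by (auto intro!: derivative_eq_intros)
  moreover have "(\<Prod>i<z. (?r - real i)) * a ^ z * ((?r - real z) * (a * t + b) powr (?r - real z - 1) * a)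
     = Dz l (Suc z) t"
    by (simp add: Dz_def algebra_simps diff_diff_eq)
  ultimately show ?thesis unfolding Dz_def by simp
qed

lemma Dz0: "t > 0 \<Longrightarrow> Dz l 0 t = T l t"
  by (simp add: Dz_def T_def)

lemma smooth_G: assumes "i < n" "j < n" shows "smooth_on n W (\<lambda>x. G x i j)"
  using assms(1)
proof (cases rule: idx_cases)
  case 1
  show ?thesis using assms(2)
  proof (cases rule: idx_cases)
    case 1
    then show ?thesis using \<open>i = 0\<close> by (simp add: G00 smooth_const)
  next
    case (2 l c)
    then show ?thesis using \<open>i = 0\<close> by (simp add: G0b smooth_const)
  qed
next
  case (2 l c)
  show ?thesis using assms(2)
  proof (cases rule: idx_cases)
    case 1
    then show ?thesis using 2 by (simp add: Ga0 smooth_const)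
  next
    case (2 l' d)
    note ld = this
    show ?thesis
    proof (cases "l = l'")
      case False
      then show ?thesis using \<open>i = off s l + c\<close> ld \<open>l < m\<close> \<open>c < s l\<close> by (simp add: Gab_ne smooth_const)
    next
      case True
      have sm: "smooth_on n W (\<lambda>y. Dz l 0 (y 0) * g l (fib l y) c d)"
        by (rule smooth_prod[where D="Dz l" and B="\<lambda>y. g l y c d" and l=l, OF \<open>l < m\<close> Dz_DERIV fib_smooth]) (use \<open>c < s l\<close> ld True in auto)
      show ?thesis
        by (rule smooth_cong[OF W_open _ sm]) (use \<open>i = off s l + c\<close> ld True \<open>l < m\<close> \<open>c < s l\<close> in \<open>auto simp: Gab W_pos Dz0\<close>)
    qed
  qed
qed

lemma semi: "semi_riem_metric n W G"
proof -
  have h2: "\<forall>i<n. \<forall>j<n. smooth_on n W (\<lambda>x. G x i j)" using smooth_G by simp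
  have h3: "\<forall>x\<in>W. \<forall>i j. G x i j = G x j i" using G_sym by simp
  have h4: "\<forall>x\<in>W. \<exists>B. is_inverse_mat n (G x) B" using Ginv_inv by auto
  show ?thesis unfolding semi_riem_metric_def using W_open h2 h3 h4 by (intro conjI)
qed

lemma ricci_flat: "ricci_flat_on n W G"
  unfolding ricci_flat_on_def
proof (intro ballI allI impI)
  fix x i j assume x: "x \<in> W" and i: "i < n" and j: "j < n"
  show "ricci n G x i j = 0" using i
  proof (cases rule: idx_cases)
    case 1
    show ?thesis using j
    proof (cases rule: idx_cases)
      case 1 then show ?thesis using \<open>i = 0\<close> ricci00[OF x] by simp
    next
      case (2 l d) then show ?thesis using \<open>i = 0\<close> ricci0b[OF x] by simp
    qed
  next
    case (2 l c)
    show ?thesis using j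
    proof (cases rule: idx_cases)
      case 1 then show ?thesis using 2 riccia0[OF x] by simp
    next
      case (2 l' d)
      then show ?thesis using \<open>i = off s l + c\<close> \<open>l < m\<close> \<open>c < s l\<close> ricci_ne[OF x] ricci_same[OF x]
        by (cases "l = l'") auto
    qed
  qed
qed

lemma fib_Q_nonneg:
  assumes l: "l < m" and z: "z \<in> U l"
  shows "(\<Sum>c<s l. \<Sum>d<s l. g l z c d * w c * w d) \<ge> 0"
proof (cases "\<exists>c<s l. w c \<noteq> 0")
  case True
  have "\<forall>y\<in>U l. \<forall>v. (\<exists>i<s l. v i \<noteq> 0) \<longrightarrow> (\<Sum>i<s l. \<Sum>j<s l. g l y i j * v i * v j) > 0"
    using fib_riem[OF l] unfolding riem_metric_def by (elim conjE)
  then have "(\<Sum>c<s l. \<Sum>d<s l. g l z c d * w c * w d) > 0" using z True by blast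
  then show ?thesis by (rule less_imp_le)
next
  case False then show ?thesis by simp
qed

lemma positive:
  assumes x: "x \<in> W" and v0: "v 0 = 0" and ex: "\<exists>i<n. v i \<noteq> 0"
  shows "(\<Sum>i<n. \<Sum>j<n. G x i j * v i * v j) > 0"
proof -
  let ?Q = "\<lambda>l. (\<Sum>c<s l. \<Sum>d<s l. g l (fib l x) c d * v (off s l + c) * v (off s l + d))"
  have row: "(\<Sum>j<n. G x (off s l + c) j * v (off s l + c) * v j) =
      T l (x 0) * (\<Sum>d<s l. g l (fib l x) c d * v (off s l + c) * v (off s l + d))"
    if l: "l < m" "c < s l" for l c
  proof -
    have "(\<Sum>j<n. G x (off s l + c) j * v (off s l + c) * v j) =
        (\<Sum>l2<m. \<Sum>d<s l2. G x (off s l + c) (off s l2 + d) * v (off s l + c) * v (off s l2 + d))"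
      using v0 by (simp add: sum_split)
    also have "\<dots> = (\<Sum>d<s l. G x (off s l + c) (off s l + d) * v (off s l + c) * v (off s l + d))"
      by (rule sum_single_block[OF l(1)]) (use l in \<open>auto simp: Gab_ne\<close>)
    also have "\<dots> = T l (x 0) * (\<Sum>d<s l. g l (fib l x) c d * v (off s l + c) * v (off s l + d))"
      using l W_pos[OF x] by (simp add: Gab sum_distrib_left mult_ac)
    finally show ?thesis .
  qed
  have "(\<Sum>i<n. \<Sum>j<n. G x i j * v i * v j) = (\<Sum>l<m. \<Sum>c<s l. \<Sum>j<n. G x (off s l + c) j * v (off s l + c) * v j)"
    using v0 by (subst sum_split) simp
  also have "\<dots> = (\<Sum>l<m. T l (x 0) * ?Q l)"
    by (intro sum.cong refl) (simp add: row sum_distrib_left)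
  also have "\<dots> > 0"
  proof -
    obtain i where i: "i < n" "v i \<noteq> 0" using ex by blast
    have "i \<noteq> 0"
    proof
      assume "i = 0" then show False using v0 i(2) by simp
    qed
    then obtain l0 c0 where l0: "l0 < m" "c0 < s l0" "i = off s l0 + c0" using i(1) by (auto elim: idx_cases)
    have "?Q l0 > 0"
    proof -
      have pos: "\<forall>y\<in>U l0. \<forall>v. (\<exists>i<s l0. v i \<noteq> 0) \<longrightarrow> (\<Sum>i<s l0. \<Sum>j<s l0. g l0 y i j * v i * v j) > 0"
        using fib_riem[OF l0(1)] unfolding riem_metric_def by (elim conjE)
      have "\<exists>c<s l0. (\<lambda>c. v (off s l0 + c)) c \<noteq> 0" using l0 i by auto
      note ex' = this
      have p2: "\<forall>w. (\<exists>i<s l0. w i \<noteq> 0) \<longrightarrow> 0 < (\<Sum>i<s l0. \<Sum>j<s l0. g l0 (fib l0 x) i j * w i * w j)"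
        using pos W_fib[OF x l0(1)] by blast
      show ?thesis using p2[rule_format, of "\<lambda>c. v (off s l0 + c)"] ex' by simp
    qed
    then have "T l0 (x 0) * ?Q l0 > 0" using T_pos[OF W_pos[OF x]] by simp
    moreover have "\<forall>l\<in>{..<m}. T l (x 0) * ?Q l \<ge> 0"
    proof
      fix l assume "l \<in> {..<m}"
      then have l: "l < m" by simp
      have "?Q l \<ge> 0" using fib_Q_nonneg[OF l W_fib[OF x l], of "\<lambda>c. v (off s l + c)"] by simp
      moreover have "T l (x 0) > 0" using T_pos[OF W_pos[OF x]] by simp
      ultimately show "T l (x 0) * ?Q l \<ge> 0" by simp
    qed
    ultimately show ?thesis using l0 by (intro sum_pos2[of "{..<m}" l0]) auto
  qed
  finally show ?thesis .
qed

lemma lorentz: "lorentz_metric n W G"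
proof -
  have "\<forall>x\<in>W. G x 0 0 < 0 \<and> (\<forall>v. v 0 = 0 \<longrightarrow> (\<exists>i<n. v i \<noteq> 0) \<longrightarrow> (\<Sum>i<n. \<Sum>j<n. G x i j * v i * v j) > 0)"
    using positive by (simp add: G00)
  moreover have "n \<ge> 1" by (simp add: wp_dim_def)
  ultimately show ?thesis unfolding lorentz_metric_def using semi by (intro conjI)
qed

end


theorem corollary4p9:
  fixes m :: nat and s :: "nat \<Rightarrow> nat" and U :: "nat \<Rightarrow> (nat \<Rightarrow> real) set"
    and g :: "nat \<Rightarrow> metric" and p :: "nat \<Rightarrow> real"
    and \<zeta> \<eta> \<zeta>' \<eta>' a b :: real
  assumes fibres: "\<forall>i<m. riem_metric (s i) (U i) (g i) \<and> ricci_flat_on (s i) (U i) (g i)"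
    and zeta_def: "\<zeta> = (\<Sum>l<m. real (s l) * p l)"
    and eta_def: "\<eta> = (\<Sum>l<m. real (s l) * (p l)\<^sup>2)"
    and "\<zeta>' \<noteq> 0" and "\<eta>' \<noteq> 0" and "\<zeta>'\<^sup>2 = \<eta>'"
    and "a \<ge> 0" and "b \<ge> 0" and "a\<^sup>2 + b\<^sup>2 > 0"
    and "\<zeta> = \<zeta>'" and "\<eta> = \<eta>'"
    and "\<forall>i<m. \<zeta> - p i \<noteq> 0" and "\<forall>i<m. \<eta> - p i * \<zeta> \<noteq> 0"
  shows "lorentz_metric (wp_dim m s) (wp_domain m s U)
           (wp_metric m s g (\<lambda>t. (a * t + b) powr (1 / \<zeta>)) p)
       \<and> ricci_flat_on (wp_dim m s) (wp_domain m s U)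
           (wp_metric m s g (\<lambda>t. (a * t + b) powr (1 / \<zeta>)) p)"
proof -
  have eta': "(\<Sum>l<m. real (s l) * (p l)\<^sup>2) = \<zeta>\<^sup>2"
    using eta_def assms(6,10,11) by simp
  have znz: "\<zeta> \<noteq> 0" using assms(4,10) by simp
  interpret wp m s U g p \<zeta> a b
    by unfold_locales (use fibres zeta_def eta' znz assms(7,8,9) in auto)
  show ?thesis using lorentz ricci_flat unfolding G_def by simp
qed

end
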